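(* Let $E$ be any subset of the equations $\{(\mathsf e),(\mathsf c),(!\mathsf e),(!\mathsf c),(!\mathsf a1),(!\mathsf a2)\}$ and let $\mathcal V$ be the variety of integral interior $r\ell u$-groupoids satisfying all equations in $E$. Then $\mathcal V$ has the finite embeddability property.
   Context: A unital groupoid is a set with a (not necessarily associative) binary operation $\cdot$ and a two-sided unit $1$. An $r\ell u$-groupoid is an algebra $(A,\wedge,\vee,\cdot,\backslash,/,1)$ such that $(A,\wedge,\vee)$ is a lattice with order $\le$, $(A,\cdot,1)$ is a unital groupoid, and $x\cdot y\le z\iff y\le x\backslash z\iff x\le z/y$. An interior $r\ell u$-groupoid additionally has a unary operation $!$ with $1\le !1$, $!x\cdot !y\le !(x\cdot y)$, $!x\le x$, $!x\le !!x$, and $x\le y\Rightarrow !x\le !y$. It is integral if $x\le 1$ for all $x$. Equations: $(\mathsf e)$ $x\cdot y\le y\cdot x$; $(\mathsf c)$ $x\le x\cdot x$; $(!\mathsf c)$ $!x\le !x\cdot !x$; $(!\mathsf e)$ $!x\cdot y=y\cdot !x$; $(!\mathsf a1)$ $!x\cdot(y\cdot z)=(!x\cdot y)\cdot z$; $(!\mathsf a2)$ $x\cdot(y\cdot !z)=(x\cdot y)\cdot !z$. A partial subalgebra of an algebra $\mathbf C$ is a subset $B$ with $f^{\mathbf B}(\vec b)=f^{\mathbf C}(\vec b)$ if this lies in $B$ and undefined otherwise. An embedding of a partial algebra $\mathbf B$ into an algebra $\mathbf D$ is an injective map $h$ with $h(f^{\mathbf B}(\vec b))=f^{\mathbf D}(h(\vec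 b))$ whenever the left side is defined. A class $\mathcal K$ has the finite embeddability property (FEP) if every finite partial subalgebra of a member of $\mathcal K$ embeds into a finite member of $\mathcal K$. *)

theory Defs
  imports Main
begin

record 'a irlu =
  carrier :: "'a set"
  meet :: "'a \<Rightarrow> 'a \<Rightarrow> 'a"
  join :: "'a \<Rightarrow> 'a \<Rightarrow> 'a"
  mult :: "'a \<Rightarrow> 'a \<Rightarrow> 'a"
  ldiv :: "'a \<Rightarrow> 'a \<Rightarrow> 'a"
  rdiv :: "'a \<Rightarrow> 'a \<Rightarrow> 'a"
  one :: "'a"
  bang :: "'a \<Rightarrow> 'a"

definition leq :: "('a, 'b) irlu_scheme \<Rightarrow> 'a \<Rightarrow> 'a \<Rightarrow> bool" where
  "leq A x y \<longleftrightarrow> meet A x y = x"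

definition closed_ops :: "('a, 'b) irlu_scheme \<Rightarrow> bool" where
  "closed_ops A \<longleftrightarrow> one A \<in> carrier A \<and>
     (\<forall>x\<in>carrier A. bang A x \<in> carrier A) \<and>
     (\<forall>x\<in>carrier A. \<forall>y\<in>carrier A.
        meet A x y \<in> carrier A \<and> join A x y \<in> carrier A \<and> mult A x y \<in> carrier A \<and>
        ldiv A x y \<in> carrier A \<and> rdiv A x y \<in> carrier A)"

definition is_lattice :: "('a, 'b) irlu_scheme \<Rightarrow> bool" where
  "is_lattice A \<longleftrightarrow>
     (\<forall>x\<in>carrier A. \<forall>y\<in>carrier A.
        meet A x y = meet A y x \<and> join A x y = join A y x \<and>
        meet A x (join A x y) = x \<and> join A x (meet A x y) = x) \<and>
     (\<forall>x\<in>carrier A. \<forall>y\<in>carrier A. \<forall>z\<in>carrier A.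
        meet A x (meet A y z) = meet A (meet A x y) z \<and>
        join A x (join A y z) = join A (join A x y) z)"

definition rlu_groupoid :: "('a, 'b) irlu_scheme \<Rightarrow> bool" where
  "rlu_groupoid A \<longleftrightarrow> closed_ops A \<and> is_lattice A \<and>
     (\<forall>x\<in>carrier A. mult A (one A) x = x \<and> mult A x (one A) = x) \<and>
     (\<forall>x\<in>carrier A. \<forall>y\<in>carrier A. \<forall>z\<in>carrier A.
        (leq A (mult A x y) z \<longleftrightarrow> leq A y (ldiv A x z)) \<and>
        (leq A (mult A x y) z \<longleftrightarrow> leq A x (rdiv A z y)))"

definition interior_rlu_groupoid :: "('a, 'b) irlu_scheme \<Rightarrow> bool" where
  "interior_rlu_groupoid A \<longleftrightarrow> rlu_groupoid A \<and>
     leq A (one A) (bang A (one A)) \<and>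
     (\<forall>x\<in>carrier A. \<forall>y\<in>carrier A.
        leq A (mult A (bang A x) (bang A y)) (bang A (mult A x y))) \<and>
     (\<forall>x\<in>carrier A. leq A (bang A x) x \<and> leq A (bang A x) (bang A (bang A x))) \<and>
     (\<forall>x\<in>carrier A. \<forall>y\<in>carrier A. leq A x y \<longrightarrow> leq A (bang A x) (bang A y))"

definition integral :: "('a, 'b) irlu_scheme \<Rightarrow> bool" where
  "integral A \<longleftrightarrow> (\<forall>x\<in>carrier A. leq A x (one A))"

datatype eqn = Eq_e | Eq_c | Eq_bang_e | Eq_bang_c | Eq_bang_a1 | Eq_bang_a2

fun satisfies :: "('a, 'b) irlu_scheme \<Rightarrow> eqn \<Rightarrow> bool" where
  "satisfies A Eq_e = (\<forall>x\<in>carrier A. \<forall>y\<in>carrier A. leq A (mult A x y) (mult A y x))"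
| "satisfies A Eq_c = (\<forall>x\<in>carrier A. leq A x (mult A x x))"
| "satisfies A Eq_bang_c = (\<forall>x\<in>carrier A. leq A (bang A x) (mult A (bang A x) (bang A x)))"
| "satisfies A Eq_bang_e = (\<forall>x\<in>carrier A. \<forall>y\<in>carrier A. mult A (bang A x) y = mult A y (bang A x))"
| "satisfies A Eq_bang_a1 = (\<forall>x\<in>carrier A. \<forall>y\<in>carrier A. \<forall>z\<in>carrier A.
      mult A (bang A x) (mult A y z) = mult A (mult A (bang A x) y) z)"
| "satisfies A Eq_bang_a2 = (\<forall>x\<in>carrier A. \<forall>y\<in>carrier A. \<forall>z\<in>carrier A.
      mult A x (mult A y (bang A z)) = mult A (mult A x y) (bang A z))"

definition in_V :: "eqn set \<Rightarrow> ('a, 'b) irlu_scheme \<Rightarrow> bool" where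
  "in_V E A \<longleftrightarrow> interior_rlu_groupoid A \<and> integral A \<and> (\<forall>e\<in>E. satisfies A e)"

definition partial_embedding ::
  "('a, 'c) irlu_scheme \<Rightarrow> 'a set \<Rightarrow> ('a \<Rightarrow> 'b) \<Rightarrow> ('b, 'd) irlu_scheme \<Rightarrow> bool" where
  "partial_embedding C B h D \<longleftrightarrow> inj_on h B \<and> h ` B \<subseteq> carrier D \<and>
     (one C \<in> B \<longrightarrow> h (one C) = one D) \<and>
     (\<forall>x\<in>B. bang C x \<in> B \<longrightarrow> h (bang C x) = bang D (h x)) \<and>
     (\<forall>x\<in>B. \<forall>y\<in>B.
        (meet C x y \<in> B \<longrightarrow> h (meet C x y) = meet D (h x) (h y)) \<and>
        (join C x y \<in> B \<longrightarrow> h (join C x y) = join D (h x) (h y)) \<and>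
        (mult C x y \<in> B \<longrightarrow> h (mult C x y) = mult D (h x) (h y)) \<and>
        (ldiv C x y \<in> B \<longrightarrow> h (ldiv C x y) = ldiv D (h x) (h y)) \<and>
        (rdiv C x y \<in> B \<longrightarrow> h (rdiv C x y) = rdiv D (h x) (h y)))"

end

theory Submission
  imports Defs "HOL-Library.Ramsey" "HOL-Library.Infinite_Set"
begin


datatype 'a tr = Lf 'a | Hl | Ml "'a tr" "'a tr" | Bg "'a tr"

inductive emb :: "'a tr \<Rightarrow> 'a tr \<Rightarrow> bool" where
  emb_Lf: "emb (Lf a) (Lf a)"
| emb_Hl: "emb Hl Hl"
| emb_L: "emb s t1 \<Longrightarrow> emb s (Ml t1 t2)"
| emb_R: "emb s t2 \<Longrightarrow> emb s (Ml t1 t2)"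
| emb_B: "emb s t \<Longrightarrow> emb s (Bg t)"
| emb_MM: "emb s1 t1 \<Longrightarrow> emb s2 t2 \<Longrightarrow> emb (Ml s1 s2) (Ml t1 t2)"
| emb_BB: "emb s t \<Longrightarrow> emb (Bg s) (Bg t)"

lemma emb_refl: "emb t t"
  by (induction t) (auto intro: emb.intros)

fun lbls :: "'a tr \<Rightarrow> 'a set" where
  "lbls (Lf a) = {a}" | "lbls Hl = {}" | "lbls (Ml s t) = lbls s \<union> lbls t" | "lbls (Bg s) = lbls s"

definition good :: "(nat \<Rightarrow> 'a tr) \<Rightarrow> bool" where
  "good f \<longleftrightarrow> (\<exists>i j. i < j \<and> emb (f i) (f j))"

lemma ramsey_seq:
  fixes x :: "nat \<Rightarrow> 'b" and P :: "'b \<Rightarrow> 'b \<Rightarrow> bool"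
  shows "\<exists>\<phi>::nat\<Rightarrow>nat. strict_mono \<phi> \<and> ((\<forall>i j. i < j \<longrightarrow> P (x (\<phi> i)) (x (\<phi> j))) \<or>
                                  (\<forall>i j. i < j \<longrightarrow> \<not> P (x (\<phi> i)) (x (\<phi> j))))"
proof -
  define f where "f X = (if P (x (Min X)) (x (Max X)) then 0 else (1::nat))" for X :: "nat set"
  have "\<forall>a\<in>(UNIV::nat set). \<forall>b\<in>UNIV. a \<noteq> b \<longrightarrow> f {a, b} < 2" by (simp add: f_def)
  from Ramsey2[OF infinite_UNIV_nat this] obtain Y t where
    Y: "infinite Y" "\<forall>a\<in>Y. \<forall>b\<in>Y. a \<noteq> b \<longrightarrow> f {a, b} = t" by blast
  define \<phi> where "\<phi> = enumerate Y"
  have sm: "strict_mono \<phi>" unfolding \<phi>_def strict_mono_def using Y(1) by (simp add: enumerate_mono)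
  have col: "f {\<phi> i, \<phi> j} = t" if "i < j" for i j
  proof -
    have "\<phi> i \<in> Y" "\<phi> j \<in> Y" unfolding \<phi>_def using Y(1) by (simp_all add: enumerate_in_set)
    moreover have "\<phi> i \<noteq> \<phi> j" using sm that by (simp add: strict_mono_eq)
    ultimately show ?thesis using Y(2) by blast
  qed
  have mm: "Min {\<phi> i, \<phi> j} = \<phi> i \<and> Max {\<phi> i, \<phi> j} = \<phi> j" if "i < j" for i j
  proof -
    have "\<phi> i < \<phi> j" using sm that by (simp add: strict_mono_less)
    then show ?thesis by (simp add: Min_insert Max_insert)
  qed
  show ?thesis
  proof (cases "t = 0")
    case True
    have allP: "\<forall>i j. i < j \<longrightarrow> P (x (\<phi> i)) (x (\<phi> j))"
    proof (intro allI impI)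
      fix i j :: nat assume ij: "i < j"
      have "f {\<phi> i, \<phi> j} = 0" using col[OF ij] True by simp
      then show "P (x (\<phi> i)) (x (\<phi> j))" using mm[OF ij] unfolding f_def by (simp split: if_splits)
    qed
    show ?thesis using sm allP by meson
  next
    case False
    have allP: "\<forall>i j. i < j \<longrightarrow> \<not> P (x (\<phi> i)) (x (\<phi> j))"
    proof (intro allI impI)
      fix i j :: nat assume ij: "i < j"
      have "f {\<phi> i, \<phi> j} \<noteq> 0" using col[OF ij] False by simp
      then show "\<not> P (x (\<phi> i)) (x (\<phi> j))" using mm[OF ij] unfolding f_def by (simp split: if_splits)
    qed
    show ?thesis using sm allP by meson
  qed
qed


lemma emb_trans_child_L: "emb s a \<Longrightarrow> emb s (Ml a b)" by (rule emb_L)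

lemma strict_mono_ge0: "strict_mono (\<phi>::nat\<Rightarrow>nat) \<Longrightarrow> \<phi> 0 \<le> \<phi> k"
  by (simp add: strict_mono_less_eq)

lemma chain_or_bad:
  fixes x :: "nat \<Rightarrow> 'b"
  assumes "\<And>g::nat\<Rightarrow>'b. (\<forall>i. P (g i)) \<Longrightarrow> (\<exists>i j. i < j \<and> R (g i) (g j))"
    and "\<forall>i. P (x i)"
  shows "\<exists>\<phi>::nat\<Rightarrow>nat. strict_mono \<phi> \<and> (\<forall>i j. i < j \<longrightarrow> R (x (\<phi> i)) (x (\<phi> j)))"
proof -
  obtain \<phi> :: "nat \<Rightarrow> nat" where sm: "strict_mono \<phi>" and
    d: "(\<forall>i j. i < j \<longrightarrow> R (x (\<phi> i)) (x (\<phi> j))) \<or> (\<forall>i j. i < j \<longrightarrow> \<not> R (x (\<phi> i)) (x (\<phi> j)))"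
    using ramsey_seq[of R x] by blast
  have "\<exists>i j. i < j \<and> R (x (\<phi> i)) (x (\<phi> j))" using assms(1)[of "\<lambda>i. x (\<phi> i)"] assms(2) by blast
  then have "\<forall>i j. i < j \<longrightarrow> R (x (\<phi> i)) (x (\<phi> j))" using d by blast
  then show ?thesis using sm by blast
qed

context
  fixes L :: "'a set"
  assumes finL: "finite L"
begin

definition badT :: "(nat \<Rightarrow> 'a tr) \<Rightarrow> bool" where
  "badT g \<longleftrightarrow> (\<forall>i. lbls (g i) \<subseteq> L) \<and> \<not> good g"

definition PP :: "'a tr list \<Rightarrow> 'a tr \<Rightarrow> bool" where
  "PP xs t \<longleftrightarrow> (\<exists>g. badT g \<and> (\<forall>i<length xs. g i = xs ! i) \<and> g (length xs) = t)"

definition stp :: "'a tr list \<Rightarrow> 'a tr" where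
  "stp xs = (SOME t. PP xs t \<and> (\<forall>t'. PP xs t' \<longrightarrow> size t \<le> size t'))"

primrec pre :: "nat \<Rightarrow> 'a tr list" where
  "pre 0 = []" | "pre (Suc n) = pre n @ [stp (pre n)]"

lemma length_pre[simp]: "length (pre n) = n"
  by (induction n) auto

lemma stp_spec:
  assumes "\<exists>t. PP xs t"
  shows "PP xs (stp xs) \<and> (\<forall>t'. PP xs t' \<longrightarrow> size (stp xs) \<le> size t')"
proof -
  from assms obtain t where "PP xs t" by blast
  from ex_has_least_nat[of "PP xs" t size, OF this]
  have "\<exists>t. PP xs t \<and> (\<forall>t'. PP xs t' \<longrightarrow> size t \<le> size t')" .
  then show ?thesis unfolding stp_def by (rule someI_ex)
qed

lemma pre_ex:
  assumes "badT f0"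
  shows "\<exists>t. PP (pre n) t"
proof (induction n)
  case 0
  show ?case unfolding PP_def using assms by auto
next
  case (Suc n)
  from stp_spec[OF Suc] have "PP (pre n) (stp (pre n))" by blast
  then obtain g where g: "badT g" "\<forall>i<n. g i = pre n ! i" "g n = stp (pre n)"
    unfolding PP_def by auto
  have "\<forall>i<Suc n. g i = pre (Suc n) ! i"
    using g by (auto simp: nth_append less_Suc_eq)
  then have "PP (pre (Suc n)) (g (Suc n))" unfolding PP_def using g(1) by auto
  then show ?case by blast
qed

definition mbs :: "nat \<Rightarrow> 'a tr" where "mbs n = stp (pre n)"

lemma pre_nth: "i < n \<Longrightarrow> pre n ! i = mbs i"
proof (induction n)
  case 0 then show ?case by simp
next
  case (Suc n) then show ?case
    by (auto simp: nth_append less_Suc_eq mbs_def)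
qed

lemma mbs_props:
  assumes "badT f0"
  shows "badT mbs"
    and "\<And>g n. badT g \<Longrightarrow> (\<forall>i<n. g i = mbs i) \<Longrightarrow> size (mbs n) \<le> size (g n)"
proof -
  have A: "\<exists>g. badT g \<and> (\<forall>i\<le>n. g i = mbs i)" for n
  proof -
    have "PP (pre n) (mbs n)" using stp_spec[OF pre_ex[OF assms]] unfolding mbs_def by blast
    then obtain g where "badT g" "\<forall>i<n. g i = pre n ! i" "g n = mbs n" unfolding PP_def by auto
    then show ?thesis using pre_nth by (metis le_neq_implies_less)
  qed
  show "badT mbs" unfolding badT_def good_def
  proof (intro conjI allI notI)
    fix i
    from A[of i] obtain g where "badT g" "\<forall>k\<le>i. g k = mbs k" by blast
    then show "lbls (mbs i) \<subseteq> L" unfolding badT_def by (metis order_refl)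
  next
    assume "\<exists>i j. i < j \<and> emb (mbs i) (mbs j)"
    then obtain i j where ij: "i < j" "emb (mbs i) (mbs j)" by blast
    from A[of j] obtain g where "badT g" "\<forall>k\<le>j. g k = mbs k" by blast
    then show False using ij unfolding badT_def good_def by (metis less_imp_le order_refl)
  qed
  fix g n assume "badT g" "\<forall>i<n. g i = mbs i"
  then have "PP (pre n) (g n)" unfolding PP_def using pre_nth by auto
  then show "size (mbs n) \<le> size (g n)" using stp_spec[OF pre_ex[OF assms]] unfolding mbs_def by blast
qed

lemma child_good:
  assumes bf: "badT f0" and sm: "strict_mono \<phi>"
    and ch: "\<And>k. (\<forall>s. emb s (c k) \<longrightarrow> emb s (mbs (\<phi> k))) \<and> size (c k) < size (mbs (\<phi> k))
                \<and> lbls (c k) \<subseteq> L"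
  shows "good c"
proof (rule ccontr)
  assume nc: "\<not> good c"
  note M = mbs_props[OF bf]
  define g where "g i = (if i < \<phi> 0 then mbs i else c (i - \<phi> 0))" for i
  have "badT g" unfolding badT_def good_def
  proof (intro conjI allI notI)
    fix i show "lbls (g i) \<subseteq> L" using M(1) ch unfolding g_def badT_def by auto
  next
    assume "\<exists>i j. i < j \<and> emb (g i) (g j)"
    then obtain i j where ij: "i < j" "emb (g i) (g j)" by blast
    show False
    proof (cases "j < \<phi> 0")
      case True
      then show False using ij M(1) unfolding g_def badT_def good_def by auto
    next
      case False
      note jF = False
      show False
      proof (cases "i < \<phi> 0")
        case True
        then have "emb (mbs i) (c (j - \<phi> 0))" using ij jF unfolding g_def by auto
        then have "emb (mbs i) (mbs (\<phi> (j - \<phi> 0)))" using ch by blast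
        moreover have "i < \<phi> (j - \<phi> 0)" using True strict_mono_ge0[OF sm, of "j - \<phi> 0"] by linarith
        ultimately show False using M(1) unfolding badT_def good_def by blast
      next
        case False
        then have "emb (c (i - \<phi> 0)) (c (j - \<phi> 0))" using ij jF unfolding g_def by auto
        moreover have "i - \<phi> 0 < j - \<phi> 0" using ij False by linarith
        ultimately show False using nc unfolding good_def by blast
      qed
    qed
  qed
  moreover have "\<forall>i<\<phi> 0. g i = mbs i" unfolding g_def by auto
  ultimately have "size (mbs (\<phi> 0)) \<le> size (g (\<phi> 0))" using M(2) by blast
  moreover have "g (\<phi> 0) = c 0" unfolding g_def by simp
  ultimately show False using ch[of 0] by simp
qed

lemma no_bad: "\<not> badT f0"
proof
  assume bf: "badT f0"
  note M = mbs_props[OF bf]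
  have Mb: "\<not> emb (mbs i) (mbs j)" if "i < j" for i j
    using M(1) that unfolding badT_def good_def by blast
  have MLb: "lbls (mbs i) \<subseteq> L" for i
    using M(1) unfolding badT_def by blast
  have inj: "inj mbs"
  proof (rule injI)
    fix i j assume "mbs i = mbs j"
    then show "i = j" using Mb[of i j] Mb[of j i] emb_refl[of "mbs i"] by (metis linorder_neqE_nat)
  qed
  define S where "S = insert Hl (Lf ` L)"
  have "finite S" unfolding S_def using finL by simp
  then have "finite (mbs -` S)" using inj by (simp add: finite_vimageI)
  then have inf: "infinite (UNIV - mbs -` S)" by (simp add: Diff_infinite_finite)
  have cases: "(\<exists>a b. mbs i = Ml a b) \<or> (\<exists>a. mbs i = Bg a)" if "i \<in> UNIV - mbs -` S" for i
    using that MLb[of i] unfolding S_def by (cases "mbs i") auto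
  have "infinite {i. \<exists>a b. mbs i = Ml a b} \<or> infinite {i. \<exists>a. mbs i = Bg a}"
  proof (rule ccontr)
    assume "\<not> ?thesis"
    then have "finite ({i. \<exists>a b. mbs i = Ml a b} \<union> {i. \<exists>a. mbs i = Bg a})" by simp
    moreover have "UNIV - mbs -` S \<subseteq> {i. \<exists>a b. mbs i = Ml a b} \<union> {i. \<exists>a. mbs i = Bg a}"
      using cases by blast
    ultimately show False using inf finite_subset by blast
  qed
  then show False
  proof
    assume I: "infinite {i. \<exists>a b. mbs i = Ml a b}"
    define \<phi> where "\<phi> = enumerate {i. \<exists>a b. mbs i = Ml a b}"
    have sm: "strict_mono \<phi>" unfolding \<phi>_def strict_mono_def using I by (blast intro: enumerate_mono)
    have inI: "\<exists>a b. mbs (\<phi> k) = Ml a b" for k unfolding \<phi>_def using enumerate_in_set[OF I] by blast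
    define lc where "lc k = (case mbs (\<phi> k) of Ml a b \<Rightarrow> a)" for k
    define rc where "rc k = (case mbs (\<phi> k) of Ml a b \<Rightarrow> b)" for k
    have mk: "mbs (\<phi> k) = Ml (lc k) (rc k)" for k using inI[of k] unfolding lc_def rc_def by auto
    have lgood: "good (\<lambda>k. lc (\<psi> k))" if "strict_mono \<psi>" for \<psi>
    proof (rule child_good[OF bf, of "\<phi> \<circ> \<psi>"])
      show "strict_mono (\<phi> \<circ> \<psi>)" using sm that by (simp add: strict_mono_def)
      fix k
      show "(\<forall>s. emb s (lc (\<psi> k)) \<longrightarrow> emb s (mbs ((\<phi> \<circ> \<psi>) k))) \<and> size (lc (\<psi> k)) < size (mbs ((\<phi> \<circ> \<psi>) k)) \<and> lbls (lc (\<psi> k)) \<subseteq> L"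
        using mk[of "\<psi> k"] MLb[of "\<phi> (\<psi> k)"] by (auto intro: emb_L)
    qed
    have rgood: "good (\<lambda>k. rc (\<psi> k))" if "strict_mono \<psi>" for \<psi>
    proof (rule child_good[OF bf, of "\<phi> \<circ> \<psi>"])
      show "strict_mono (\<phi> \<circ> \<psi>)" using sm that by (simp add: strict_mono_def)
      fix k
      show "(\<forall>s. emb s (rc (\<psi> k)) \<longrightarrow> emb s (mbs ((\<phi> \<circ> \<psi>) k))) \<and> size (rc (\<psi> k)) < size (mbs ((\<phi> \<circ> \<psi>) k)) \<and> lbls (rc (\<psi> k)) \<subseteq> L"
        using mk[of "\<psi> k"] MLb[of "\<phi> (\<psi> k)"] by (auto intro: emb_R)
    qed
    obtain \<psi> :: "nat \<Rightarrow> nat" where sp: "strict_mono \<psi>" and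
      d: "(\<forall>i j. i < j \<longrightarrow> emb (lc (\<psi> i)) (lc (\<psi> j))) \<or> (\<forall>i j. i < j \<longrightarrow> \<not> emb (lc (\<psi> i)) (lc (\<psi> j)))"
      using ramsey_seq[of emb lc] by blast
    have ch: "\<forall>i j. i < j \<longrightarrow> emb (lc (\<psi> i)) (lc (\<psi> j))"
      using d lgood[OF sp] unfolding good_def by blast
    from rgood[OF sp] obtain i j where ij: "i < j" "emb (rc (\<psi> i)) (rc (\<psi> j))" unfolding good_def by blast
    have "emb (mbs (\<phi> (\<psi> i))) (mbs (\<phi> (\<psi> j)))"
      unfolding mk using ch ij by (blast intro: emb_MM)
    moreover have "\<phi> (\<psi> i) < \<phi> (\<psi> j)" using sm sp ij(1) by (simp add: strict_mono_less)
    ultimately show False using Mb by blast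
  next
    assume I: "infinite {i. \<exists>a. mbs i = Bg a}"
    define \<phi> where "\<phi> = enumerate {i. \<exists>a. mbs i = Bg a}"
    have sm: "strict_mono \<phi>" unfolding \<phi>_def strict_mono_def using I by (blast intro: enumerate_mono)
    have inI: "\<exists>a. mbs (\<phi> k) = Bg a" for k unfolding \<phi>_def using enumerate_in_set[OF I] by blast
    define bc where "bc k = (case mbs (\<phi> k) of Bg a \<Rightarrow> a)" for k
    have mk: "mbs (\<phi> k) = Bg (bc k)" for k using inI[of k] unfolding bc_def by auto
    have "good bc"
    proof (rule child_good[OF bf sm])
      fix k
      show "(\<forall>s. emb s (bc k) \<longrightarrow> emb s (mbs (\<phi> k))) \<and> size (bc k) < size (mbs (\<phi> k)) \<and> lbls (bc k) \<subseteq> L"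
        using mk[of k] MLb[of "\<phi> k"] by (auto intro: emb_B)
    qed
    then obtain i j where ij: "i < j" "emb (bc i) (bc j)" unfolding good_def by blast
    have "emb (mbs (\<phi> i)) (mbs (\<phi> j))" unfolding mk using ij by (blast intro: emb_BB)
    moreover have "\<phi> i < \<phi> j" using sm ij(1) by (simp add: strict_mono_less)
    ultimately show False using Mb by blast
  qed
qed

lemma kruskal: "(\<forall>i. lbls (f i) \<subseteq> L) \<Longrightarrow> good f"
  using no_bad[of f] unfolding badT_def by blast

end


locale ialg =
  fixes C :: "('a, 'b) irlu_scheme"
  assumes intC: "interior_rlu_groupoid C" and integC: "integral C"
begin

abbreviation "A \<equiv> carrier C"
abbreviation le (infix "\<sqsubseteq>" 50) where "x \<sqsubseteq> y \<equiv> leq C x y"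

lemma rlu: "rlu_groupoid C" using intC unfolding interior_rlu_groupoid_def by blast
lemma clo: "closed_ops C" using rlu unfolding rlu_groupoid_def by blast
lemma lat: "is_lattice C" using rlu unfolding rlu_groupoid_def by blast

lemma cl_one[simp]: "one C \<in> A" using clo unfolding closed_ops_def by blast
lemma cl_bang[simp]: "x \<in> A \<Longrightarrow> bang C x \<in> A" using clo unfolding closed_ops_def by blast
lemma cl_ops[simp]: "x \<in> A \<Longrightarrow> y \<in> A \<Longrightarrow> meet C x y \<in> A"
  "x \<in> A \<Longrightarrow> y \<in> A \<Longrightarrow> join C x y \<in> A" "x \<in> A \<Longrightarrow> y \<in> A \<Longrightarrow> mult C x y \<in> A"
  "x \<in> A \<Longrightarrow> y \<in> A \<Longrightarrow> ldiv C x y \<in> A" "x \<in> A \<Longrightarrow> y \<in> A \<Longrightarrow> rdiv C x y \<in> A"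
  using clo unfolding closed_ops_def by blast+

lemma meet_comm: "x \<in> A \<Longrightarrow> y \<in> A \<Longrightarrow> meet C x y = meet C y x" using lat unfolding is_lattice_def by blast
lemma join_comm: "x \<in> A \<Longrightarrow> y \<in> A \<Longrightarrow> join C x y = join C y x" using lat unfolding is_lattice_def by blast
lemma abs1: "x \<in> A \<Longrightarrow> y \<in> A \<Longrightarrow> meet C x (join C x y) = x" using lat unfolding is_lattice_def by blast
lemma abs2: "x \<in> A \<Longrightarrow> y \<in> A \<Longrightarrow> join C x (meet C x y) = x" using lat unfolding is_lattice_def by blast
lemma meet_assoc: "x \<in> A \<Longrightarrow> y \<in> A \<Longrightarrow> z \<in> A \<Longrightarrow> meet C x (meet C y z) = meet C (meet C x y) z"
  using lat unfolding is_lattice_def by blast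
lemma join_assoc: "x \<in> A \<Longrightarrow> y \<in> A \<Longrightarrow> z \<in> A \<Longrightarrow> join C x (join C y z) = join C (join C x y) z"
  using lat unfolding is_lattice_def by blast

lemma le_refl[simp]: "x \<in> A \<Longrightarrow> x \<sqsubseteq> x"
  unfolding leq_def by (metis abs1 abs2 cl_ops(1))

lemma le_trans: "x \<in> A \<Longrightarrow> y \<in> A \<Longrightarrow> z \<in> A \<Longrightarrow> x \<sqsubseteq> y \<Longrightarrow> y \<sqsubseteq> z \<Longrightarrow> x \<sqsubseteq> z"
  unfolding leq_def by (metis meet_assoc)

lemma le_antisym: "x \<in> A \<Longrightarrow> y \<in> A \<Longrightarrow> x \<sqsubseteq> y \<Longrightarrow> y \<sqsubseteq> x \<Longrightarrow> x = y"
  unfolding leq_def by (metis meet_comm)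

lemma le_join_eq: "x \<in> A \<Longrightarrow> y \<in> A \<Longrightarrow> x \<sqsubseteq> y \<longleftrightarrow> join C x y = y"
  unfolding leq_def by (metis abs1 abs2 join_comm meet_comm)

lemma join_ub1: "x \<in> A \<Longrightarrow> y \<in> A \<Longrightarrow> x \<sqsubseteq> join C x y"
  unfolding leq_def by (simp add: abs1)
lemma join_ub2: "x \<in> A \<Longrightarrow> y \<in> A \<Longrightarrow> y \<sqsubseteq> join C x y"
  using join_ub1 join_comm by metis
lemma join_lub: "x \<in> A \<Longrightarrow> y \<in> A \<Longrightarrow> z \<in> A \<Longrightarrow> x \<sqsubseteq> z \<Longrightarrow> y \<sqsubseteq> z \<Longrightarrow> join C x y \<sqsubseteq> z"
  using le_join_eq join_assoc by (metis cl_ops(2))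

lemma meet_lb1: "x \<in> A \<Longrightarrow> y \<in> A \<Longrightarrow> meet C x y \<sqsubseteq> x"
  unfolding leq_def by (metis meet_assoc meet_comm le_refl leq_def)
lemma meet_lb2: "x \<in> A \<Longrightarrow> y \<in> A \<Longrightarrow> meet C x y \<sqsubseteq> y"
  using meet_lb1 meet_comm by metis
lemma meet_glb: "x \<in> A \<Longrightarrow> y \<in> A \<Longrightarrow> z \<in> A \<Longrightarrow> z \<sqsubseteq> x \<Longrightarrow> z \<sqsubseteq> y \<Longrightarrow> z \<sqsubseteq> meet C x y"
  unfolding leq_def by (metis meet_assoc)

lemma unit_l[simp]: "x \<in> A \<Longrightarrow> mult C (one C) x = x" using rlu unfolding rlu_groupoid_def by blast
lemma unit_r[simp]: "x \<in> A \<Longrightarrow> mult C x (one C) = x" using rlu unfolding rlu_groupoid_def by blast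

lemma res_l: "x \<in> A \<Longrightarrow> y \<in> A \<Longrightarrow> z \<in> A \<Longrightarrow> mult C x y \<sqsubseteq> z \<longleftrightarrow> y \<sqsubseteq> ldiv C x z"
  using rlu unfolding rlu_groupoid_def by blast
lemma res_r: "x \<in> A \<Longrightarrow> y \<in> A \<Longrightarrow> z \<in> A \<Longrightarrow> mult C x y \<sqsubseteq> z \<longleftrightarrow> x \<sqsubseteq> rdiv C z y"
  using rlu unfolding rlu_groupoid_def by blast

lemma mult_mono_r: "x \<in> A \<Longrightarrow> y \<in> A \<Longrightarrow> y' \<in> A \<Longrightarrow> y \<sqsubseteq> y' \<Longrightarrow> mult C x y \<sqsubseteq> mult C x y'"
  by (metis cl_ops(3,4) le_refl le_trans res_l)
lemma mult_mono_l: "x \<in> A \<Longrightarrow> x' \<in> A \<Longrightarrow> y \<in> A \<Longrightarrow> x \<sqsubseteq> x' \<Longrightarrow> mult C x y \<sqsubseteq> mult C x' y"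
  by (metis cl_ops(3,5) le_refl le_trans res_r)
lemma mult_mono: "x \<in> A \<Longrightarrow> x' \<in> A \<Longrightarrow> y \<in> A \<Longrightarrow> y' \<in> A \<Longrightarrow> x \<sqsubseteq> x' \<Longrightarrow> y \<sqsubseteq> y' \<Longrightarrow> mult C x y \<sqsubseteq> mult C x' y'"
  by (meson cl_ops(3) le_trans mult_mono_l mult_mono_r)

lemma le_one: "x \<in> A \<Longrightarrow> x \<sqsubseteq> one C" using integC unfolding integral_def by blast
lemma mult_le1: "x \<in> A \<Longrightarrow> y \<in> A \<Longrightarrow> mult C x y \<sqsubseteq> x"
  by (metis cl_one le_one mult_mono_r unit_r)
lemma mult_le2: "x \<in> A \<Longrightarrow> y \<in> A \<Longrightarrow> mult C x y \<sqsubseteq> y"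
  by (metis cl_one le_one mult_mono_l unit_l)

lemma bang_le: "x \<in> A \<Longrightarrow> bang C x \<sqsubseteq> x" using intC unfolding interior_rlu_groupoid_def by blast
lemma bang_bang: "x \<in> A \<Longrightarrow> bang C x \<sqsubseteq> bang C (bang C x)" using intC unfolding interior_rlu_groupoid_def by blast
lemma bang_mono: "x \<in> A \<Longrightarrow> y \<in> A \<Longrightarrow> x \<sqsubseteq> y \<Longrightarrow> bang C x \<sqsubseteq> bang C y" using intC unfolding interior_rlu_groupoid_def by blast
lemma bang_mult: "x \<in> A \<Longrightarrow> y \<in> A \<Longrightarrow> mult C (bang C x) (bang C y) \<sqsubseteq> bang C (mult C x y)" using intC unfolding interior_rlu_groupoid_def by blast
lemma bang_one: "one C \<sqsubseteq> bang C (one C)" using intC unfolding interior_rlu_groupoid_def by blast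

end


fun hf :: "'a tr \<Rightarrow> bool" where
  "hf (Lf a) = True" | "hf Hl = False" | "hf (Ml s t) = (hf s \<and> hf t)" | "hf (Bg s) = hf s"

fun ev :: "('a, 'b) irlu_scheme \<Rightarrow> 'a \<Rightarrow> 'a tr \<Rightarrow> 'a" where
  "ev C v (Lf a) = a" | "ev C v Hl = v" | "ev C v (Ml s t) = mult C (ev C v s) (ev C v t)"
| "ev C v (Bg s) = bang C (ev C v s)"

fun subst :: "'a tr \<Rightarrow> 'a tr \<Rightarrow> 'a tr" where
  "subst (Lf a) s = Lf a" | "subst Hl s = s" | "subst (Ml a b) s = Ml (subst a s) (subst b s)"
| "subst (Bg a) s = Bg (subst a s)"

lemma ev_hf: "hf t \<Longrightarrow> ev C v t = ev C v' t"
  by (induction t) auto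

lemma subst_hf: "hf t \<Longrightarrow> subst t s = t"
  by (induction t) auto

lemma ev_subst: "ev C v (subst c s) = ev C (ev C v s) c"
  by (induction c) auto

locale frm = ialg C for C :: "('a, 'b) irlu_scheme" +
  fixes B :: "'a set"
  assumes BA: "B \<subseteq> carrier C" and finB: "finite B"
begin

definition "Lb = insert (one C) B"
definition "W = {t. hf t \<and> lbls t \<subseteq> Lb}"
definition "evl t = ev C (one C) t"

lemma finLb: "finite Lb" unfolding Lb_def using finB by simp
lemma LbA: "Lb \<subseteq> A" unfolding Lb_def using BA by simp

inductive_set PC :: "'a tr set" where
  PC_Hl: "Hl \<in> PC"
| PC_L: "c \<in> PC \<Longrightarrow> t \<in> W \<Longrightarrow> Ml c t \<in> PC"
| PC_R: "c \<in> PC \<Longrightarrow> t \<in> W \<Longrightarrow> Ml t c \<in> PC"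

lemma PC_lbls: "c \<in> PC \<Longrightarrow> lbls c \<subseteq> Lb"
  by (induction rule: PC.induct) (auto simp: W_def)

lemma ev_A: "v \<in> A \<Longrightarrow> lbls t \<subseteq> A \<Longrightarrow> ev C v t \<in> A"
  by (induction t) auto

lemma W_lbls: "t \<in> W \<Longrightarrow> lbls t \<subseteq> A" unfolding W_def using LbA by blast
lemma PC_lblsA: "c \<in> PC \<Longrightarrow> lbls c \<subseteq> A" using PC_lbls LbA by blast

lemma evl_A[simp]: "t \<in> W \<Longrightarrow> evl t \<in> A" unfolding evl_def by (simp add: ev_A W_lbls)

lemma evl_W: "t \<in> W \<Longrightarrow> ev C v t = evl t" unfolding evl_def W_def by (auto intro: ev_hf)

lemma W_Ml[simp]: "Ml s t \<in> W \<longleftrightarrow> s \<in> W \<and> t \<in> W" unfolding W_def by auto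
lemma W_Bg[simp]: "Bg s \<in> W \<longleftrightarrow> s \<in> W" unfolding W_def by auto
lemma W_Lf[simp]: "Lf a \<in> W \<longleftrightarrow> a \<in> Lb" unfolding W_def by auto
lemma evl_Ml[simp]: "evl (Ml s t) = mult C (evl s) (evl t)" unfolding evl_def by simp
lemma evl_Bg[simp]: "evl (Bg s) = bang C (evl s)" unfolding evl_def by simp
lemma evl_Lf[simp]: "evl (Lf a) = a" unfolding evl_def by simp

lemma ctx_mono: "c \<in> PC \<Longrightarrow> v \<in> A \<Longrightarrow> v' \<in> A \<Longrightarrow> v \<sqsubseteq> v' \<Longrightarrow> ev C v c \<sqsubseteq> ev C v' c"
proof (induction rule: PC.induct)
  case PC_Hl then show ?case by simp
next
  case (PC_L c t)
  have "ev C v c \<in> A" "ev C v' c \<in> A" using PC_L ev_A PC_lblsA by auto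
  then show ?case using PC_L evl_W[of t] by (auto intro!: mult_mono_l)
next
  case (PC_R c t)
  have "ev C v c \<in> A" "ev C v' c \<in> A" using PC_R ev_A PC_lblsA by auto
  then show ?case using PC_R evl_W[of t] by (auto intro!: mult_mono_r)
qed

lemma ctx_join: "c \<in> PC \<Longrightarrow> v \<in> A \<Longrightarrow> v' \<in> A \<Longrightarrow> b \<in> A \<Longrightarrow> ev C v c \<sqsubseteq> b \<Longrightarrow> ev C v' c \<sqsubseteq> b
   \<Longrightarrow> ev C (join C v v') c \<sqsubseteq> b"
proof (induction arbitrary: b rule: PC.induct)
  case PC_Hl then show ?case by (simp add: join_lub)
next
  case (PC_L c t)
  have tA: "ev C u t \<in> A" for u using PC_L(2) evl_W evl_A by metis
  have cA: "ev C u c \<in> A" if "u \<in> A" for u using PC_L PC_lblsA ev_A that by simp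
  from PC_L.prems have "ev C v c \<sqsubseteq> rdiv C b (ev C v t)" "ev C v' c \<sqsubseteq> rdiv C b (ev C v' t)"
    using res_r tA cA by auto
  moreover have "ev C v t = ev C (join C v v') t" "ev C v' t = ev C (join C v v') t"
    using evl_W PC_L by auto
  ultimately have "ev C (join C v v') c \<sqsubseteq> rdiv C b (ev C (join C v v') t)"
    using PC_L tA by auto
  then show ?case using res_r tA cA PC_L by auto
next
  case (PC_R c t)
  have tA: "ev C u t \<in> A" for u using PC_R(2) evl_W evl_A by metis
  have cA: "ev C u c \<in> A" if "u \<in> A" for u using PC_R PC_lblsA ev_A that by simp
  from PC_R.prems have "ev C v c \<sqsubseteq> ldiv C (ev C v t) b" "ev C v' c \<sqsubseteq> ldiv C (ev C v' t) b"
    using res_l tA cA by auto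
  moreover have "ev C v t = ev C (join C v v') t" "ev C v' t = ev C (join C v v') t"
    using evl_W PC_R by auto
  ultimately have "ev C (join C v v') c \<sqsubseteq> ldiv C (ev C (join C v v') t) b"
    using PC_R tA by auto
  then show ?case using res_l tA cA PC_R by auto
qed

lemma emb_lbls: "emb s t \<Longrightarrow> lbls s \<subseteq> lbls t"
  by (induction rule: emb.induct) auto

lemma emb_ev: "emb s t \<Longrightarrow> lbls t \<subseteq> A \<Longrightarrow> v \<in> A \<Longrightarrow> ev C v t \<sqsubseteq> ev C v s"
proof (induction rule: emb.induct)
  case (emb_Lf a) then show ?case by simp
next
  case emb_Hl then show ?case by simp
next
  case (emb_L s t1 t2)
  have a: "ev C v t1 \<in> A" "ev C v t2 \<in> A" "ev C v s \<in> A"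
    using emb_L ev_A emb_lbls[OF emb_L(1)] by auto
  have "ev C v t1 \<sqsubseteq> ev C v s" using emb_L by simp
  moreover have "mult C (ev C v t1) (ev C v t2) \<sqsubseteq> ev C v t1" using a mult_le1 by simp
  ultimately show ?case using a le_trans[of "mult C (ev C v t1) (ev C v t2)" "ev C v t1" "ev C v s"] by simp
next
  case (emb_R s t2 t1)
  have a: "ev C v t1 \<in> A" "ev C v t2 \<in> A" "ev C v s \<in> A"
    using emb_R ev_A emb_lbls[OF emb_R(1)] by auto
  have "ev C v t2 \<sqsubseteq> ev C v s" using emb_R by simp
  moreover have "mult C (ev C v t1) (ev C v t2) \<sqsubseteq> ev C v t2" using a mult_le2 by simp
  ultimately show ?case using a le_trans[of "mult C (ev C v t1) (ev C v t2)" "ev C v t2" "ev C v s"] by simp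
next
  case (emb_B s t)
  have a: "ev C v t \<in> A" "ev C v s \<in> A"
    using emb_B ev_A emb_lbls[OF emb_B(1)] by auto
  have "ev C v t \<sqsubseteq> ev C v s" using emb_B by simp
  moreover have "bang C (ev C v t) \<sqsubseteq> ev C v t" using a bang_le by simp
  ultimately show ?case using a le_trans[of "bang C (ev C v t)" "ev C v t" "ev C v s"] by simp
next
  case (emb_MM s1 t1 s2 t2)
  have a: "ev C v t1 \<in> A" "ev C v t2 \<in> A" "ev C v s1 \<in> A" "ev C v s2 \<in> A"
    using emb_MM ev_A emb_lbls[OF emb_MM(1)] emb_lbls[OF emb_MM(2)] by auto
  show ?case using emb_MM a mult_mono by simp
next
  case (emb_BB s t)
  have a: "ev C v t \<in> A" "ev C v s \<in> A"
    using emb_BB ev_A emb_lbls[OF emb_BB(1)] by auto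
  show ?case using emb_BB a bang_mono by simp
qed


definition basic :: "'a tr \<Rightarrow> 'a \<Rightarrow> 'a tr set" where
  "basic c b = {w \<in> W. ev C (evl w) c \<sqsubseteq> b}"

definition gam :: "'a tr set \<Rightarrow> 'a tr set" where
  "gam S = {w \<in> W. \<forall>c\<in>PC. \<forall>b\<in>B. S \<subseteq> basic c b \<longrightarrow> w \<in> basic c b}"

definition prd :: "'a tr set \<Rightarrow> 'a tr set \<Rightarrow> 'a tr set" where
  "prd X Y = {Ml x y | x y. x \<in> X \<and> y \<in> Y}"

definition Ds :: "'a tr set set" where
  "Ds = {X. X \<subseteq> W \<and> gam X = X}"

lemma gam_W: "gam S \<subseteq> W" unfolding gam_def by blast
lemma gam_ext: "S \<subseteq> W \<Longrightarrow> S \<subseteq> gam S" unfolding gam_def by blast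
lemma gam_mono: "S \<subseteq> T \<Longrightarrow> gam S \<subseteq> gam T" unfolding gam_def by blast
lemma gam_idem[simp]: "gam (gam S) = gam S"
proof
  show "gam (gam S) \<subseteq> gam S" unfolding gam_def by blast
  show "gam S \<subseteq> gam (gam S)" using gam_ext gam_W by blast
qed
lemma gam_Ds: "gam S \<in> Ds" unfolding Ds_def using gam_W by simp
lemma Ds_W: "X \<in> Ds \<Longrightarrow> X \<subseteq> W" unfolding Ds_def by blast
lemma Ds_gam: "X \<in> Ds \<Longrightarrow> gam X = X" unfolding Ds_def by blast
lemma gam_least: "S \<subseteq> X \<Longrightarrow> X \<in> Ds \<Longrightarrow> gam S \<subseteq> X"
  using gam_mono Ds_gam by blast

lemma basic_closed: "c \<in> PC \<Longrightarrow> b \<in> B \<Longrightarrow> gam (basic c b) \<subseteq> basic c b"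
  unfolding gam_def by blast
lemma basic_W: "basic c b \<subseteq> W" unfolding basic_def by blast
lemma basic_Ds: "c \<in> PC \<Longrightarrow> b \<in> B \<Longrightarrow> basic c b \<in> Ds"
proof -
  assume "c \<in> PC" "b \<in> B"
  then have "gam (basic c b) = basic c b" using basic_closed basic_W gam_ext by (intro subset_antisym) auto
  then show ?thesis unfolding Ds_def using basic_W by simp
qed

lemma down_gam:
  assumes w: "w \<in> W" and x: "x \<in> gam S" and le: "evl w \<sqsubseteq> evl x"
  shows "w \<in> gam S"
  unfolding gam_def
proof (intro CollectI conjI w ballI impI)
  fix c b assume cb: "c \<in> PC" "b \<in> B" "S \<subseteq> basic c b"
  have xW: "x \<in> W" using x gam_W by blast
  have "x \<in> basic c b" using x cb unfolding gam_def by blast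
  then have "ev C (evl x) c \<sqsubseteq> b" unfolding basic_def by blast
  moreover have "ev C (evl w) c \<sqsubseteq> ev C (evl x) c" using ctx_mono[OF cb(1)] le w xW by simp
  moreover have "b \<in> A" using cb BA by blast
  moreover have "ev C (evl w) c \<in> A" "ev C (evl x) c \<in> A"
    using ev_A PC_lblsA cb(1) w xW evl_A by auto
  ultimately have "ev C (evl w) c \<sqsubseteq> b"
    using le_trans[of "ev C (evl w) c" "ev C (evl x) c" b] by blast
  then show "w \<in> basic c b" unfolding basic_def using w by blast
qed

lemma down_Ds: "X \<in> Ds \<Longrightarrow> w \<in> W \<Longrightarrow> x \<in> X \<Longrightarrow> evl w \<sqsubseteq> evl x \<Longrightarrow> w \<in> X"
  using down_gam Ds_gam by metis

lemma down_gen: "S \<subseteq> W \<Longrightarrow> w \<in> W \<Longrightarrow> x \<in> S \<Longrightarrow> evl w \<sqsubseteq> evl x \<Longrightarrow> w \<in> gam S"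
  using down_gam gam_ext by blast

lemma PC_subst_L: "c \<in> PC \<Longrightarrow> x \<in> W \<Longrightarrow> subst c (Ml x Hl) \<in> PC"
proof (induction rule: PC.induct)
  case PC_Hl then show ?case by (simp add: PC.intros)
next
  case (PC_L c t) then show ?case using subst_hf[of t] by (auto simp: W_def intro: PC.intros)
next
  case (PC_R c t) then show ?case using subst_hf[of t] by (auto simp: W_def intro: PC.intros)
qed

lemma PC_subst_R: "c \<in> PC \<Longrightarrow> x \<in> W \<Longrightarrow> subst c (Ml Hl x) \<in> PC"
proof (induction rule: PC.induct)
  case PC_Hl then show ?case by (simp add: PC.intros)
next
  case (PC_L c t) then show ?case using subst_hf[of t] by (auto simp: W_def intro: PC.intros)
next
  case (PC_R c t) then show ?case using subst_hf[of t] by (auto simp: W_def intro: PC.intros)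
qed

lemma basic_subst_L: "x \<in> W \<Longrightarrow> w \<in> W \<Longrightarrow> w \<in> basic (subst c (Ml x Hl)) b \<longleftrightarrow> Ml x w \<in> basic c b"
  unfolding basic_def by (simp add: ev_subst evl_W)

lemma basic_subst_R: "x \<in> W \<Longrightarrow> w \<in> W \<Longrightarrow> w \<in> basic (subst c (Ml Hl x)) b \<longleftrightarrow> Ml w x \<in> basic c b"
  unfolding basic_def by (simp add: ev_subst evl_W)

lemma prd_W: "S \<subseteq> W \<Longrightarrow> T \<subseteq> W \<Longrightarrow> prd S T \<subseteq> W" unfolding prd_def by auto

lemma nucleus_sub:
  assumes S: "S \<subseteq> W" and T: "T \<subseteq> W"
  shows "prd (gam S) (gam T) \<subseteq> gam (prd S T)"
proof
  fix z assume "z \<in> prd (gam S) (gam T)"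
  then obtain x' y' where z: "z = Ml x' y'" and x': "x' \<in> gam S" and y': "y' \<in> gam T"
    unfolding prd_def by blast
  have x'W: "x' \<in> W" and y'W: "y' \<in> W" using x' y' gam_W by blast+
  show "z \<in> gam (prd S T)" unfolding gam_def z
  proof (intro CollectI conjI ballI impI)
    show "Ml x' y' \<in> W" using x'W y'W by simp
    fix c b assume cb: "c \<in> PC" "b \<in> B" "prd S T \<subseteq> basic c b"
    have step1: "Ml x y' \<in> basic c b" if x: "x \<in> S" for x
    proof -
      have xW: "x \<in> W" using x S by blast
      have "T \<subseteq> basic (subst c (Ml x Hl)) b"
      proof
        fix y assume y: "y \<in> T"
        then have "Ml x y \<in> basic c b" using cb(3) x unfolding prd_def by blast
        then show "y \<in> basic (subst c (Ml x Hl)) b" using basic_subst_L xW y T by blast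
      qed
      then have "y' \<in> basic (subst c (Ml x Hl)) b"
        using y' PC_subst_L[OF cb(1) xW] cb(2) unfolding gam_def by blast
      then show ?thesis using basic_subst_L xW y'W by blast
    qed
    have "S \<subseteq> basic (subst c (Ml Hl y')) b"
      using step1 basic_subst_R y'W S by blast
    then have "x' \<in> basic (subst c (Ml Hl y')) b"
      using x' PC_subst_R[OF cb(1) y'W] cb(2) unfolding gam_def by blast
    then show "Ml x' y' \<in> basic c b" using basic_subst_R x'W y'W by blast
  qed
qed

lemma prd_mono: "S \<subseteq> S' \<Longrightarrow> T \<subseteq> T' \<Longrightarrow> prd S T \<subseteq> prd S' T'" unfolding prd_def by blast

lemma nucleus: "S \<subseteq> W \<Longrightarrow> T \<subseteq> W \<Longrightarrow> gam (prd (gam S) (gam T)) = gam (prd S T)"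
proof
  assume S: "S \<subseteq> W" and T: "T \<subseteq> W"
  show "gam (prd (gam S) (gam T)) \<subseteq> gam (prd S T)"
    using gam_mono[OF nucleus_sub[OF S T]] by simp
  show "gam (prd S T) \<subseteq> gam (prd (gam S) (gam T))"
    using gam_mono[OF prd_mono[OF gam_ext[OF S] gam_ext[OF T]]] .
qed

lemma ldiv_Ds:
  assumes X: "X \<subseteq> W" and Z: "Z \<in> Ds"
  shows "{w \<in> W. \<forall>x\<in>X. Ml x w \<in> Z} \<in> Ds"
proof -
  let ?R = "{w \<in> W. \<forall>x\<in>X. Ml x w \<in> Z}"
  have "gam ?R \<subseteq> ?R"
  proof
    fix w assume w: "w \<in> gam ?R"
    have wW: "w \<in> W" using w gam_W by blast
    have "Ml x w \<in> Z" if x: "x \<in> X" for x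
    proof -
      have xW: "x \<in> W" using x X by blast
      have "Ml x w \<in> gam Z" unfolding gam_def
      proof (intro CollectI conjI ballI impI)
        show "Ml x w \<in> W" using xW wW by simp
        fix c b assume cb: "c \<in> PC" "b \<in> B" "Z \<subseteq> basic c b"
        have "?R \<subseteq> basic (subst c (Ml x Hl)) b" using basic_subst_L xW cb(3) x by blast
        then have "w \<in> basic (subst c (Ml x Hl)) b"
          using w PC_subst_L[OF cb(1) xW] cb(2) unfolding gam_def by blast
        then show "Ml x w \<in> basic c b" using basic_subst_L xW wW by blast
      qed
      then show ?thesis using Ds_gam[OF Z] by simp
    qed
    then show "w \<in> ?R" using wW by blast
  qed
  then have "gam ?R = ?R" using gam_ext[of ?R] by (intro subset_antisym) auto
  then show ?thesis unfolding Ds_def by simp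
qed

lemma rdiv_Ds:
  assumes Y: "Y \<subseteq> W" and Z: "Z \<in> Ds"
  shows "{w \<in> W. \<forall>y\<in>Y. Ml w y \<in> Z} \<in> Ds"
proof -
  let ?R = "{w \<in> W. \<forall>y\<in>Y. Ml w y \<in> Z}"
  have "gam ?R \<subseteq> ?R"
  proof
    fix w assume w: "w \<in> gam ?R"
    have wW: "w \<in> W" using w gam_W by blast
    have "Ml w y \<in> Z" if y: "y \<in> Y" for y
    proof -
      have yW: "y \<in> W" using y Y by blast
      have "Ml w y \<in> gam Z" unfolding gam_def
      proof (intro CollectI conjI ballI impI)
        show "Ml w y \<in> W" using yW wW by simp
        fix c b assume cb: "c \<in> PC" "b \<in> B" "Z \<subseteq> basic c b"
        have "?R \<subseteq> basic (subst c (Ml Hl y)) b" using basic_subst_R yW cb(3) y by blast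
        then have "w \<in> basic (subst c (Ml Hl y)) b"
          using w PC_subst_R[OF cb(1) yW] cb(2) unfolding gam_def by blast
        then show "Ml w y \<in> basic c b" using basic_subst_R yW wW by blast
      qed
      then show ?thesis using Ds_gam[OF Z] by simp
    qed
    then show "w \<in> ?R" using wW by blast
  qed
  then have "gam ?R = ?R" using gam_ext[of ?R] by (intro subset_antisym) auto
  then show ?thesis unfolding Ds_def by simp
qed

lemma inter_Ds: "X \<in> Ds \<Longrightarrow> Y \<in> Ds \<Longrightarrow> X \<inter> Y \<in> Ds"
proof -
  assume X: "X \<in> Ds" and Y: "Y \<in> Ds"
  have "gam (X \<inter> Y) \<subseteq> X \<inter> Y" using gam_least[OF _ X, of "X \<inter> Y"] gam_least[OF _ Y, of "X \<inter> Y"] by blast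
  moreover have "X \<inter> Y \<subseteq> W" using Ds_W X by blast
  ultimately have "gam (X \<inter> Y) = X \<inter> Y" using gam_ext[of "X \<inter> Y"] by (intro subset_antisym) auto
  then show ?thesis unfolding Ds_def using \<open>X \<inter> Y \<subseteq> W\<close> by simp
qed

lemma W_Ds: "W \<in> Ds"
proof -
  have "gam W = W" using gam_W gam_ext[of W] by (intro subset_antisym) auto
  then show ?thesis unfolding Ds_def by simp
qed


lemma basic_emb_mono:
  assumes "emb c c'" "c \<in> PC" "c' \<in> PC" "b \<in> A"
  shows "basic c b \<subseteq> basic c' b"
proof
  fix w assume w: "w \<in> basic c b"
  have wW: "w \<in> W" using w basic_W by blast
  have "ev C (evl w) c' \<sqsubseteq> ev C (evl w) c" using emb_ev[OF assms(1)] PC_lblsA assms(3) wW by simp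
  moreover have "ev C (evl w) c \<sqsubseteq> b" using w unfolding basic_def by blast
  moreover have "ev C (evl w) c \<in> A" "ev C (evl w) c' \<in> A" using ev_A PC_lblsA assms wW by auto
  ultimately have "ev C (evl w) c' \<sqsubseteq> b" using le_trans[of "ev C (evl w) c'" "ev C (evl w) c" b] assms(4) by blast
  then show "w \<in> basic c' b" unfolding basic_def using wW by blast
qed

lemma basic_up:
  assumes w: "w \<in> basic c b" and w': "w' \<in> W" and e: "emb w w'" and c: "c \<in> PC" and b: "b \<in> A"
  shows "w' \<in> basic c b"
proof -
  have wW: "w \<in> W" using w basic_W by blast
  have "evl w' \<sqsubseteq> evl w" unfolding evl_def using emb_ev[OF e] W_lbls[OF w'] by simp
  then have "ev C (evl w') c \<sqsubseteq> ev C (evl w) c" using ctx_mono[OF c] wW w' by simp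
  moreover have "ev C (evl w) c \<sqsubseteq> b" using w unfolding basic_def by blast
  moreover have "ev C (evl w) c \<in> A" "ev C (evl w') c \<in> A" using ev_A PC_lblsA c wW w' by auto
  ultimately have "ev C (evl w') c \<sqsubseteq> b" using le_trans[of "ev C (evl w') c" "ev C (evl w) c" b] b by blast
  then show ?thesis unfolding basic_def using w' by blast
qed

lemma good_Lb: "(\<forall>i::nat. lbls (g i) \<subseteq> Lb) \<Longrightarrow> \<exists>i j. i < j \<and> emb (g i) (g j)"
  using kruskal[OF finLb, of g] unfolding good_def by blast

lemma chain_Lb:
  fixes x :: "nat \<Rightarrow> 'a tr"
  assumes "\<forall>i. lbls (x i) \<subseteq> Lb"
  shows "\<exists>\<phi>::nat\<Rightarrow>nat. strict_mono \<phi> \<and> (\<forall>i j. i < j \<longrightarrow> emb (x (\<phi> i)) (x (\<phi> j)))"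
proof -
  obtain \<phi> :: "nat \<Rightarrow> nat" where sm: "strict_mono \<phi>" and
    d: "(\<forall>i j. i < j \<longrightarrow> emb (x (\<phi> i)) (x (\<phi> j))) \<or> (\<forall>i j. i < j \<longrightarrow> \<not> emb (x (\<phi> i)) (x (\<phi> j)))"
    using ramsey_seq[of emb x] by blast
  have "\<forall>i. lbls (x (\<phi> i)) \<subseteq> Lb" using assms by blast
  from good_Lb[OF this] have "\<exists>i j. i < j \<and> emb (x (\<phi> i)) (x (\<phi> j))" .
  then have "\<forall>i j. i < j \<longrightarrow> emb (x (\<phi> i)) (x (\<phi> j))" using d by blast
  then show ?thesis using sm by blast
qed

lemma fin_basics:
  assumes b: "b \<in> A"
  shows "finite {basic c b | c. c \<in> PC}"
proof (rule ccontr)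
  assume inf: "infinite {basic c b | c. c \<in> PC}"
  from infinite_iff_countable_subset[THEN iffD1, OF inf]
  obtain s :: "nat \<Rightarrow> 'a tr set" where s: "inj s" "range s \<subseteq> {basic c b | c. c \<in> PC}"
    by (elim exE conjE)
  have "\<forall>n. \<exists>c. c \<in> PC \<and> basic c b = s n" using s(2) by blast
  from choice[OF this] obtain cc where cc0: "\<forall>n. cc n \<in> PC \<and> basic (cc n) b = s n" by blast
  have cc: "\<And>n. cc n \<in> PC" "\<And>n. basic (cc n) b = s n" using cc0 by auto
  have lb: "\<forall>i. lbls (cc i) \<subseteq> Lb" using PC_lbls cc(1) by blast
  have gd: "\<exists>i j. i < j \<and> emb (g i) (g j)" if "\<forall>i. lbls (g i) \<subseteq> Lb" for g :: "nat \<Rightarrow> 'a tr"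
    using good_Lb that by blast
  have "\<exists>\<phi>::nat\<Rightarrow>nat. strict_mono \<phi> \<and> (\<forall>i j. i < j \<longrightarrow> emb (cc (\<phi> i)) (cc (\<phi> j)))"
    by (rule chain_Lb[OF lb])
  then obtain \<phi> :: "nat \<Rightarrow> nat" where sm: "strict_mono \<phi>" and ch: "\<forall>i j. i < j \<longrightarrow> emb (cc (\<phi> i)) (cc (\<phi> j))"
    by blast
  define U where "U k = s (\<phi> k)" for k
  have Umono: "U i \<subseteq> U j" if "i \<le> j" for i j
  proof (cases "i = j")
    case True then show ?thesis by simp
  next
    case False
    then have "emb (cc (\<phi> i)) (cc (\<phi> j))" using ch that by simp
    then show ?thesis unfolding U_def cc(2)[symmetric] using basic_emb_mono cc(1) b by blast
  qed
  have Une: "U k \<noteq> U (Suc k)" for k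
    unfolding U_def using s(1) sm by (simp add: inj_eq strict_mono_eq)
  have "\<forall>k. \<exists>u. u \<in> U (Suc k) \<and> u \<notin> U k"
  proof
    fix k
    have "U k \<subset> U (Suc k)" using Umono[of k "Suc k"] Une[of k] by auto
    then show "\<exists>u. u \<in> U (Suc k) \<and> u \<notin> U k" by (meson psubset_imp_ex_mem DiffE)
  qed
  from choice[OF this] obtain u where u0: "\<forall>k. u k \<in> U (Suc k) \<and> u k \<notin> U k" by blast
  have u: "\<And>k. u k \<in> U (Suc k)" "\<And>k. u k \<notin> U k" using u0 by auto
  have UW: "U k \<subseteq> W" for k unfolding U_def cc(2)[symmetric] by (rule basic_W)
  have uW: "u k \<in> W" for k using u(1)[of k] UW[of "Suc k"] by blast
  then have "\<forall>k. lbls (u k) \<subseteq> Lb" unfolding W_def by blast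
  from good_Lb[OF this] obtain i j where ij: "i < j" "emb (u i) (u j)" by blast
  have "u i \<in> U j" using u(1)[of i] Umono[of "Suc i" j] ij(1) by auto
  then have "u j \<in> U j" unfolding U_def cc(2)[symmetric]
    using basic_up[OF _ uW ij(2) cc(1) b] by blast
  then show False using u(2) by blast
qed

lemma finite_Ds: "finite Ds"
proof -
  define F where "F = (\<Union>b\<in>B. {basic c b | c. c \<in> PC})"
  have fF: "finite F" unfolding F_def using finB fin_basics BA by (intro finite_UN_I) auto
  have "Ds \<subseteq> (\<lambda>G. W \<inter> \<Inter>G) ` Pow F"
  proof
    fix X assume X: "X \<in> Ds"
    have eq: "X = W \<inter> \<Inter>{Y \<in> F. X \<subseteq> Y}"
    proof
      show "X \<subseteq> W \<inter> \<Inter>{Y \<in> F. X \<subseteq> Y}" using Ds_W[OF X] by blast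
      show "W \<inter> \<Inter>{Y \<in> F. X \<subseteq> Y} \<subseteq> X"
      proof
        fix w assume w: "w \<in> W \<inter> \<Inter>{Y \<in> F. X \<subseteq> Y}"
        have "w \<in> gam X" unfolding gam_def
        proof (intro CollectI conjI ballI impI)
          show "w \<in> W" using w by blast
          fix c b assume "c \<in> PC" "b \<in> B" "X \<subseteq> basic c b"
          then have "basic c b \<in> {Y \<in> F. X \<subseteq> Y}" unfolding F_def by blast
          then show "w \<in> basic c b" using w by blast
        qed
        then show "w \<in> X" using Ds_gam[OF X] by simp
      qed
    qed
    have "{Y \<in> F. X \<subseteq> Y} \<in> Pow F" by blast
    from image_eqI[where f="\<lambda>G. W \<inter> \<Inter>G", OF _ this] eq
    show "X \<in> (\<lambda>G. W \<inter> \<Inter>G) ` Pow F" by simp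
  qed
  then show ?thesis using fF finite_subset by blast
qed

end


lemma transport:
  fixes S :: "'x irlu" and C :: "('a, 'c) irlu_scheme"
  assumes V: "in_V E S" and fin: "finite (carrier S)" and pe: "partial_embedding C B h S"
  shows "\<exists>(D :: nat irlu) h'. in_V E D \<and> finite (carrier D) \<and> partial_embedding C B h' D"
proof -
  obtain f :: "'x \<Rightarrow> nat" where inj: "inj_on f (carrier S)"
    using finite_imp_inj_to_nat_seg[OF fin] by blast
  define K where "K = carrier S"
  define g where "g = the_inv_into K f"
  have gf[simp]: "x \<in> K \<Longrightarrow> g (f x) = x" for x unfolding g_def K_def using inj by (simp add: the_inv_into_f_f)
  define D :: "nat irlu" where "D = \<lparr>carrier = f ` K,
     meet = (\<lambda>m n. f (meet S (g m) (g n))), join = (\<lambda>m n. f (join S (g m) (g n))),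
     mult = (\<lambda>m n. f (mult S (g m) (g n))), ldiv = (\<lambda>m n. f (ldiv S (g m) (g n))),
     rdiv = (\<lambda>m n. f (rdiv S (g m) (g n))), one = f (one S), bang = (\<lambda>m. f (bang S (g m)))\<rparr>"
  have injK: "x \<in> K \<Longrightarrow> y \<in> K \<Longrightarrow> f x = f y \<longleftrightarrow> x = y" for x y
    using inj unfolding K_def by (meson inj_onD)
  have rV: "interior_rlu_groupoid S" "integral S" "\<forall>e\<in>E. satisfies S e" using V unfolding in_V_def by auto
  have rlu: "rlu_groupoid S" using rV(1) unfolding interior_rlu_groupoid_def by blast
  have clo: "closed_ops S" using rlu unfolding rlu_groupoid_def by blast
  have lat: "is_lattice S" using rlu unfolding rlu_groupoid_def by blast
  have cl: "one S \<in> K" "\<And>x. x \<in> K \<Longrightarrow> bang S x \<in> K"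
    "\<And>x y. x \<in> K \<Longrightarrow> y \<in> K \<Longrightarrow> meet S x y \<in> K"
    "\<And>x y. x \<in> K \<Longrightarrow> y \<in> K \<Longrightarrow> join S x y \<in> K"
    "\<And>x y. x \<in> K \<Longrightarrow> y \<in> K \<Longrightarrow> mult S x y \<in> K"
    "\<And>x y. x \<in> K \<Longrightarrow> y \<in> K \<Longrightarrow> ldiv S x y \<in> K"
    "\<And>x y. x \<in> K \<Longrightarrow> y \<in> K \<Longrightarrow> rdiv S x y \<in> K"
    using clo unfolding closed_ops_def K_def by auto
  have ops[simp]: "carrier D = f ` K" "one D = f (one S)"
    "\<And>x. x \<in> K \<Longrightarrow> bang D (f x) = f (bang S x)"
    "\<And>x y. x \<in> K \<Longrightarrow> y \<in> K \<Longrightarrow> meet D (f x) (f y) = f (meet S x y)"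
    "\<And>x y. x \<in> K \<Longrightarrow> y \<in> K \<Longrightarrow> join D (f x) (f y) = f (join S x y)"
    "\<And>x y. x \<in> K \<Longrightarrow> y \<in> K \<Longrightarrow> mult D (f x) (f y) = f (mult S x y)"
    "\<And>x y. x \<in> K \<Longrightarrow> y \<in> K \<Longrightarrow> ldiv D (f x) (f y) = f (ldiv S x y)"
    "\<And>x y. x \<in> K \<Longrightarrow> y \<in> K \<Longrightarrow> rdiv D (f x) (f y) = f (rdiv S x y)"
    unfolding D_def by simp_all
  have lq[simp]: "x \<in> K \<Longrightarrow> y \<in> K \<Longrightarrow> leq D (f x) (f y) \<longleftrightarrow> leq S x y" for x y
    unfolding leq_def using injK cl by simp
  note cl[simp]
  have fK[simp]: "x \<in> K \<Longrightarrow> f x \<in> f ` K" for x by (rule imageI)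
  have ballK: "(\<forall>m\<in>f ` K. P m) \<longleftrightarrow> (\<forall>x\<in>K. P (f x))" for P by blast
  have eqK: "x \<in> K \<Longrightarrow> y \<in> K \<Longrightarrow> f x = f y \<longleftrightarrow> x = y" for x y using injK by blast
  have cD: "closed_ops D" unfolding closed_ops_def by simp
  have m_c: "meet S x y = meet S y x" "join S x y = join S y x"
    "meet S x (join S x y) = x" "join S x (meet S x y) = x" if "x \<in> K" "y \<in> K" for x y
    using lat that unfolding is_lattice_def K_def by blast+
  have m_a: "meet S x (meet S y z) = meet S (meet S x y) z" "join S x (join S y z) = join S (join S x y) z"
    if "x \<in> K" "y \<in> K" "z \<in> K" for x y z
    using lat that unfolding is_lattice_def K_def by blast+
  have lD: "is_lattice D" unfolding is_lattice_def ops(1) ballK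
  proof (intro conjI ballI)
    fix x y assume xy: "x \<in> K" "y \<in> K"
    show "meet D (f x) (f y) = meet D (f y) (f x)" using xy m_c(1)[OF xy] by simp
    show "join D (f x) (f y) = join D (f y) (f x)" using xy m_c(2)[OF xy] by simp
    show "meet D (f x) (join D (f x) (f y)) = f x" using xy m_c(3)[OF xy] by simp
    show "join D (f x) (meet D (f x) (f y)) = f x" using xy m_c(4)[OF xy] by simp
  next
    fix x y z assume xyz: "x \<in> K" "y \<in> K" "z \<in> K"
    show "meet D (f x) (meet D (f y) (f z)) = meet D (meet D (f x) (f y)) (f z)" using xyz m_a(1)[OF xyz] by simp
    show "join D (f x) (join D (f y) (f z)) = join D (join D (f x) (f y)) (f z)" using xyz m_a(2)[OF xyz] by simp
  qed
  have un: "mult S (one S) x = x" "mult S x (one S) = x" if "x \<in> K" for x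
    using rlu that unfolding rlu_groupoid_def K_def by blast+
  have rs: "leq S (mult S x y) z \<longleftrightarrow> leq S y (ldiv S x z)" "leq S (mult S x y) z \<longleftrightarrow> leq S x (rdiv S z y)"
    if "x \<in> K" "y \<in> K" "z \<in> K" for x y z
    using rlu that unfolding rlu_groupoid_def K_def by blast+
  have rD: "rlu_groupoid D" unfolding rlu_groupoid_def ops(1) ballK
  proof (intro conjI ballI cD lD)
    fix x assume x: "x \<in> K"
    show "mult D (one D) (f x) = f x" using x un(1)[OF x] by simp
    show "mult D (f x) (one D) = f x" using x un(2)[OF x] by simp
  next
    fix x y z assume xyz: "x \<in> K" "y \<in> K" "z \<in> K"
    show "leq D (mult D (f x) (f y)) (f z) \<longleftrightarrow> leq D (f y) (ldiv D (f x) (f z))" using xyz rs(1)[OF xyz] by simp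
    show "leq D (mult D (f x) (f y)) (f z) \<longleftrightarrow> leq D (f x) (rdiv D (f z) (f y))" using xyz rs(2)[OF xyz] by simp
  qed
  have i1: "leq S (one S) (bang S (one S))" using rV(1) unfolding interior_rlu_groupoid_def by blast
  have i2: "leq S (mult S (bang S x) (bang S y)) (bang S (mult S x y))" if "x \<in> K" "y \<in> K" for x y
    using rV(1) that unfolding interior_rlu_groupoid_def K_def by blast
  have i3: "leq S (bang S x) x" "leq S (bang S x) (bang S (bang S x))" if "x \<in> K" for x
    using rV(1) that unfolding interior_rlu_groupoid_def K_def by blast+
  have i4: "leq S x y \<Longrightarrow> leq S (bang S x) (bang S y)" if "x \<in> K" "y \<in> K" for x y
    using rV(1) that unfolding interior_rlu_groupoid_def K_def by blast
  have iD: "interior_rlu_groupoid D" unfolding interior_rlu_groupoid_def ops(1) ballK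
  proof (intro conjI ballI rD impI)
    show "leq D (one D) (bang D (one D))" using i1 by simp
    fix x assume x: "x \<in> K"
    show "leq D (bang D (f x)) (f x)" using x i3(1)[OF x] by simp
    show "leq D (bang D (f x)) (bang D (bang D (f x)))" using x i3(2)[OF x] by simp
  next
    fix x y assume xy: "x \<in> K" "y \<in> K"
    show "leq D (mult D (bang D (f x)) (bang D (f y))) (bang D (mult D (f x) (f y)))" using xy i2[OF xy] by simp
    assume "leq D (f x) (f y)"
    then show "leq D (bang D (f x)) (bang D (f y))" using xy i4[OF xy] by simp
  qed
  have intD: "integral D" using rV(2) unfolding integral_def ops(1) ballK K_def[symmetric] by simp
  have sD: "satisfies D e" if "satisfies S e" for e
  proof (cases e)
    case Eq_e then show ?thesis using that by (simp add: ballK; simp add: K_def)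
  next
    case Eq_c then show ?thesis using that by (simp add: ballK; simp add: K_def)
  next
    case Eq_bang_e then show ?thesis using that by (simp add: ballK eqK; simp add: K_def)
  next
    case Eq_bang_c then show ?thesis using that by (simp add: ballK; simp add: K_def)
  next
    case Eq_bang_a1 then show ?thesis using that by (simp add: ballK eqK; simp add: K_def)
  next
    case Eq_bang_a2 then show ?thesis using that by (simp add: ballK eqK; simp add: K_def)
  qed
  have VD: "in_V E D" unfolding in_V_def using iD intD sD rV(3) by blast
  have hK: "h ` B \<subseteq> K" and pe2: "inj_on h B" using pe unfolding partial_embedding_def K_def by auto
  have hK': "x \<in> B \<Longrightarrow> h x \<in> K" for x using hK by blast
  have "partial_embedding C B (f \<circ> h) D"
    unfolding partial_embedding_def
  proof (intro conjI ballI impI)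
    show "inj_on (f \<circ> h) B" using pe2 hK inj unfolding K_def by (simp add: comp_inj_on inj_on_subset)
    show "(f \<circ> h) ` B \<subseteq> carrier D" using hK by auto
    show "(f \<circ> h) (one C) = one D" if "one C \<in> B" using pe that unfolding partial_embedding_def by simp
    fix x assume x: "x \<in> B"
    show "(f \<circ> h) (bang C x) = bang D ((f \<circ> h) x)" if "bang C x \<in> B"
      using pe that x hK' unfolding partial_embedding_def by simp
    fix y assume y: "y \<in> B"
    note P = pe[unfolded partial_embedding_def, THEN conjunct2, THEN conjunct2, THEN conjunct2, THEN conjunct2, rule_format, OF x y]
    show "(f \<circ> h) (meet C x y) = meet D ((f \<circ> h) x) ((f \<circ> h) y)" if "meet C x y \<in> B" using P that x y hK' by simp
    show "(f \<circ> h) (join C x y) = join D ((f \<circ> h) x) ((f \<circ> h) y)" if "join C x y \<in> B" using P that x y hK' by simp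
    show "(f \<circ> h) (mult C x y) = mult D ((f \<circ> h) x) ((f \<circ> h) y)" if "mult C x y \<in> B" using P that x y hK' by simp
    show "(f \<circ> h) (ldiv C x y) = ldiv D ((f \<circ> h) x) ((f \<circ> h) y)" if "ldiv C x y \<in> B" using P that x y hK' by simp
    show "(f \<circ> h) (rdiv C x y) = rdiv D ((f \<circ> h) x) ((f \<circ> h) y)" if "rdiv C x y \<in> B" using P that x y hK' by simp
  qed
  moreover have "finite (carrier D)" using fin by (simp add: K_def)
  ultimately show ?thesis using VD by blast
qed


context frm
begin

definition D0 :: "'a tr set irlu" where
  "D0 = \<lparr>carrier = Ds, meet = (\<lambda>X Y. X \<inter> Y), join = (\<lambda>X Y. gam (X \<union> Y)),
     mult = (\<lambda>X Y. gam (prd X Y)), ldiv = (\<lambda>X Z. {w \<in> W. \<forall>x\<in>X. Ml x w \<in> Z}),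
     rdiv = (\<lambda>Z Y. {w \<in> W. \<forall>y\<in>Y. Ml w y \<in> Z}), one = W, bang = (\<lambda>X. gam (Bg ` X))\<rparr>"

lemma D0_simps[simp]: "carrier D0 = Ds" "meet D0 X Y = X \<inter> Y" "join D0 X Y = gam (X \<union> Y)"
  "mult D0 X Y = gam (prd X Y)" "ldiv D0 X Z = {w \<in> W. \<forall>x\<in>X. Ml x w \<in> Z}"
  "rdiv D0 Z Y = {w \<in> W. \<forall>y\<in>Y. Ml w y \<in> Z}" "one D0 = W" "bang D0 X = gam (Bg ` X)"
  unfolding D0_def by simp_all

lemma leq_D0[simp]: "leq D0 X Y \<longleftrightarrow> X \<subseteq> Y" unfolding leq_def by auto

lemma Bg_W: "X \<subseteq> W \<Longrightarrow> Bg ` X \<subseteq> W" by auto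

lemma gam_Un: "S \<subseteq> W \<Longrightarrow> T \<subseteq> W \<Longrightarrow> gam (S \<union> gam T) = gam (S \<union> T)"
proof
  assume S: "S \<subseteq> W" and T: "T \<subseteq> W"
  have "S \<union> gam T \<subseteq> gam (S \<union> T)" using gam_ext[of "S \<union> T"] gam_mono[of T "S \<union> T"] S T by blast
  then show "gam (S \<union> gam T) \<subseteq> gam (S \<union> T)" using gam_least gam_Ds by blast
  show "gam (S \<union> T) \<subseteq> gam (S \<union> gam T)" using gam_mono gam_ext[OF T] by (meson Un_mono order_refl)
qed

lemma cD0: "closed_ops D0"
  unfolding closed_ops_def D0_simps using W_Ds gam_Ds inter_Ds ldiv_Ds rdiv_Ds Ds_W by auto

lemma lD0: "is_lattice D0"
  unfolding is_lattice_def D0_simps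
proof (intro conjI ballI)
  fix X Y assume X: "X \<in> Ds" and Y: "Y \<in> Ds"
  have XW: "X \<subseteq> W" and YW: "Y \<subseteq> W" using X Y Ds_W by auto
  show "X \<inter> Y = Y \<inter> X" by blast
  show "gam (X \<union> Y) = gam (Y \<union> X)" by (simp add: Un_commute)
  show "X \<inter> gam (X \<union> Y) = X" using gam_ext[of "X \<union> Y"] XW YW by blast
  show "gam (X \<union> X \<inter> Y) = X" using Ds_gam[OF X] by (simp add: Un_absorb2)
next
  fix X Y Z assume X: "X \<in> Ds" and Y: "Y \<in> Ds" and Z: "Z \<in> Ds"
  have XW: "X \<subseteq> W" and YW: "Y \<subseteq> W" and ZW: "Z \<subseteq> W" using X Y Z Ds_W by auto
  show "X \<inter> (Y \<inter> Z) = X \<inter> Y \<inter> Z" by blast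
  have "gam (X \<union> gam (Y \<union> Z)) = gam (X \<union> (Y \<union> Z))" using gam_Un XW YW ZW by simp
  moreover have "gam (gam (X \<union> Y) \<union> Z) = gam (Z \<union> gam (X \<union> Y))" by (simp add: Un_commute)
  moreover have "\<dots> = gam (Z \<union> (X \<union> Y))" using gam_Un XW YW ZW by simp
  ultimately show "gam (X \<union> gam (Y \<union> Z)) = gam (gam (X \<union> Y) \<union> Z)" by (simp add: Un_ac)
qed

lemma one_W: "Lf (one C) \<in> W" by (simp add: Lb_def)

lemma unit_D0:
  assumes X: "X \<in> Ds"
  shows "gam (prd W X) = X" "gam (prd X W) = X"
proof -
  have XW: "X \<subseteq> W" using X Ds_W by auto
  have "prd W X \<subseteq> X"
  proof
    fix z assume "z \<in> prd W X"
    then obtain w x where z: "z = Ml w x" "w \<in> W" "x \<in> X" unfolding prd_def by blast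
    then show "z \<in> X" using down_Ds[OF X, of z x] XW mult_le2 by auto
  qed
  moreover have "X \<subseteq> gam (prd W X)"
  proof
    fix x assume x: "x \<in> X"
    have "Ml (Lf (one C)) x \<in> prd W X" unfolding prd_def using one_W x by blast
    moreover have "evl x \<sqsubseteq> evl (Ml (Lf (one C)) x)" using subsetD[OF XW x] by simp
    ultimately show "x \<in> gam (prd W X)" using down_gen[of "prd W X" x] prd_W XW x W_Ds Ds_W by blast
  qed
  ultimately show "gam (prd W X) = X" using gam_least[OF _ X] by blast
  have "prd X W \<subseteq> X"
  proof
    fix z assume "z \<in> prd X W"
    then obtain w x where z: "z = Ml x w" "w \<in> W" "x \<in> X" unfolding prd_def by blast
    then show "z \<in> X" using down_Ds[OF X, of z x] XW mult_le1 by auto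
  qed
  moreover have "X \<subseteq> gam (prd X W)"
  proof
    fix x assume x: "x \<in> X"
    have "Ml x (Lf (one C)) \<in> prd X W" unfolding prd_def using one_W x by blast
    moreover have "evl x \<sqsubseteq> evl (Ml x (Lf (one C)))" using subsetD[OF XW x] by simp
    ultimately show "x \<in> gam (prd X W)" using down_gen[of "prd X W" x] prd_W XW x W_Ds Ds_W by blast
  qed
  ultimately show "gam (prd X W) = X" using gam_least[OF _ X] by blast
qed

lemma res_D0:
  assumes X: "X \<in> Ds" and Y: "Y \<in> Ds" and Z: "Z \<in> Ds"
  shows "gam (prd X Y) \<subseteq> Z \<longleftrightarrow> Y \<subseteq> {w \<in> W. \<forall>x\<in>X. Ml x w \<in> Z}"
    and "gam (prd X Y) \<subseteq> Z \<longleftrightarrow> X \<subseteq> {w \<in> W. \<forall>y\<in>Y. Ml w y \<in> Z}"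
proof -
  have XW: "X \<subseteq> W" and YW: "Y \<subseteq> W" using X Y Ds_W by auto
  have e: "gam (prd X Y) \<subseteq> Z \<longleftrightarrow> prd X Y \<subseteq> Z"
    using gam_least[OF _ Z] gam_ext[OF prd_W[OF XW YW]] by blast
  show "gam (prd X Y) \<subseteq> Z \<longleftrightarrow> Y \<subseteq> {w \<in> W. \<forall>x\<in>X. Ml x w \<in> Z}"
    unfolding e unfolding prd_def using YW by blast
  show "gam (prd X Y) \<subseteq> Z \<longleftrightarrow> X \<subseteq> {w \<in> W. \<forall>y\<in>Y. Ml w y \<in> Z}"
    unfolding e unfolding prd_def using XW by blast
qed

lemma rD0: "rlu_groupoid D0"
  unfolding rlu_groupoid_def
  using cD0 lD0 unit_D0 res_D0 by simp


lemma gam_le: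
  assumes S: "S \<subseteq> W" and T: "T \<subseteq> W" and st: "\<And>s. s \<in> S \<Longrightarrow> \<exists>t\<in>T. evl s \<sqsubseteq> evl t"
  shows "gam S \<subseteq> gam T"
proof -
  have "S \<subseteq> gam T"
  proof
    fix s assume s: "s \<in> S"
    then obtain t where "t \<in> T" "evl s \<sqsubseteq> evl t" using st by blast
    then show "s \<in> gam T" using down_gen[OF T, of s t] s S by blast
  qed
  then show ?thesis using gam_least gam_Ds by blast
qed

lemma prdW2: "X \<in> Ds \<Longrightarrow> Y \<in> Ds \<Longrightarrow> prd X Y \<subseteq> W" using prd_W Ds_W by blast

lemma iD0: "interior_rlu_groupoid D0"
  unfolding interior_rlu_groupoid_def D0_simps leq_D0
proof (intro conjI ballI impI rD0)
  show "W \<subseteq> gam (Bg ` W)"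
  proof
    fix w assume w: "w \<in> W"
    have "evl w \<sqsubseteq> evl (Bg (Lf (one C)))"
      using le_trans[of "evl w" "one C" "bang C (one C)"] le_one[of "evl w"] bang_one w by simp
    moreover have "Bg (Lf (one C)) \<in> Bg ` W" using one_W by blast
    ultimately show "w \<in> gam (Bg ` W)" using down_gen[of "Bg ` W" w] w Bg_W[of W] by blast
  qed
next
  fix X Y assume X: "X \<in> Ds" and Y: "Y \<in> Ds"
  have XW: "X \<subseteq> W" and YW: "Y \<subseteq> W" using X Y Ds_W by auto
  have "gam (prd (gam (Bg ` X)) (gam (Bg ` Y))) = gam (prd (Bg ` X) (Bg ` Y))"
    using nucleus Bg_W XW YW by blast
  also have "\<dots> \<subseteq> gam (Bg ` gam (prd X Y))"
  proof (rule gam_le)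
    show "prd (Bg ` X) (Bg ` Y) \<subseteq> W" using prd_W Bg_W XW YW by blast
    show "Bg ` gam (prd X Y) \<subseteq> W" using Bg_W gam_W by blast
    fix s assume "s \<in> prd (Bg ` X) (Bg ` Y)"
    then obtain x y where s: "s = Ml (Bg x) (Bg y)" "x \<in> X" "y \<in> Y" unfolding prd_def by blast
    have "Ml x y \<in> gam (prd X Y)" using gam_ext[OF prd_W[OF XW YW]] s unfolding prd_def by blast
    moreover have "evl s \<sqsubseteq> evl (Bg (Ml x y))" using s XW YW bang_mult subsetD[OF XW] subsetD[OF YW] by auto
    ultimately show "\<exists>t\<in>Bg ` gam (prd X Y). evl s \<sqsubseteq> evl t" by blast
  qed
  finally show "gam (prd (gam (Bg ` X)) (gam (Bg ` Y))) \<subseteq> gam (Bg ` gam (prd X Y))" .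
next
  fix X assume X: "X \<in> Ds"
  have XW: "X \<subseteq> W" using X Ds_W by auto
  have "Bg ` X \<subseteq> X"
  proof
    fix z assume "z \<in> Bg ` X"
    then obtain x where z: "z = Bg x" "x \<in> X" by blast
    then show "z \<in> X" using down_Ds[OF X, of z x] XW bang_le by auto
  qed
  then show "gam (Bg ` X) \<subseteq> X" using gam_least[OF _ X] by blast
  show "gam (Bg ` X) \<subseteq> gam (Bg ` gam (Bg ` X))"
  proof (rule gam_le)
    show "Bg ` X \<subseteq> W" using Bg_W XW by blast
    show "Bg ` gam (Bg ` X) \<subseteq> W" using Bg_W gam_W by blast
    fix s assume "s \<in> Bg ` X"
    then obtain x where s: "s = Bg x" "x \<in> X" by blast
    have "Bg x \<in> gam (Bg ` X)" using gam_ext[OF Bg_W[OF XW]] s by blast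
    moreover have "evl s \<sqsubseteq> evl (Bg (Bg x))" using s XW bang_bang subsetD[OF XW] by auto
    ultimately show "\<exists>t\<in>Bg ` gam (Bg ` X). evl s \<sqsubseteq> evl t" by blast
  qed
next
  fix X Y :: "'a tr set" assume "X \<subseteq> Y"
  then show "gam (Bg ` X) \<subseteq> gam (Bg ` Y)" by (intro gam_mono image_mono)
qed

lemma intD0: "integral D0" unfolding integral_def using Ds_W by simp

lemma sat_D0: "satisfies C e \<Longrightarrow> satisfies D0 e"
proof (cases e)
  case Eq_e
  assume sC: "satisfies C e"
  show ?thesis unfolding Eq_e satisfies.simps D0_simps leq_D0
  proof (intro ballI)
    fix X Y assume X: "X \<in> Ds" and Y: "Y \<in> Ds"
    have XW: "X \<subseteq> W" and YW: "Y \<subseteq> W" using X Y Ds_W by auto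
    show "gam (prd X Y) \<subseteq> gam (prd Y X)"
    proof (rule gam_le[OF prd_W[OF XW YW] prd_W[OF YW XW]])
      fix s assume "s \<in> prd X Y"
      then obtain x y where s: "s = Ml x y" "x \<in> X" "y \<in> Y" unfolding prd_def by blast
      have "Ml y x \<in> prd Y X" using s unfolding prd_def by blast
      moreover have "evl s \<sqsubseteq> evl (Ml y x)" using sC s XW YW subsetD[OF XW] subsetD[OF YW] unfolding Eq_e by auto
      ultimately show "\<exists>t\<in>prd Y X. evl s \<sqsubseteq> evl t" by blast
    qed
  qed
next
  case Eq_c
  assume sC: "satisfies C e"
  show ?thesis unfolding Eq_c satisfies.simps D0_simps leq_D0
  proof (intro ballI)
    fix X assume X: "X \<in> Ds"
    have XW: "X \<subseteq> W" using X Ds_W by auto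
    have "gam X \<subseteq> gam (prd X X)"
    proof (rule gam_le[OF XW prd_W[OF XW XW]])
      fix s assume s: "s \<in> X"
      have "Ml s s \<in> prd X X" using s unfolding prd_def by blast
      moreover have "evl s \<sqsubseteq> evl (Ml s s)" using sC s XW subsetD[OF XW] unfolding Eq_c by auto
      ultimately show "\<exists>t\<in>prd X X. evl s \<sqsubseteq> evl t" by blast
    qed
    then show "X \<subseteq> gam (prd X X)" using Ds_gam[OF X] by simp
  qed
next
  case Eq_bang_c
  assume sC: "satisfies C e"
  show ?thesis unfolding Eq_bang_c satisfies.simps D0_simps leq_D0
  proof (intro ballI)
    fix X assume X: "X \<in> Ds"
    have XW: "X \<subseteq> W" using X Ds_W by auto
    have BW: "Bg ` X \<subseteq> W" using Bg_W XW by blast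
    have "gam (Bg ` X) \<subseteq> gam (prd (gam (Bg ` X)) (gam (Bg ` X)))"
    proof (rule gam_le[OF BW prd_W[OF gam_W gam_W]])
      fix s assume "s \<in> Bg ` X"
      then obtain x where s: "s = Bg x" "x \<in> X" by blast
      have "Ml s s \<in> prd (gam (Bg ` X)) (gam (Bg ` X))" using s gam_ext[OF BW] unfolding prd_def by blast
      moreover have "evl s \<sqsubseteq> evl (Ml s s)" using sC s XW subsetD[OF XW] unfolding Eq_bang_c by auto
      ultimately show "\<exists>t\<in>prd (gam (Bg ` X)) (gam (Bg ` X)). evl s \<sqsubseteq> evl t" by blast
    qed
    then show "gam (Bg ` X) \<subseteq> gam (prd (gam (Bg ` X)) (gam (Bg ` X)))" by simp
  qed
next
  case Eq_bang_e
  assume sC: "satisfies C e"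
  show ?thesis unfolding Eq_bang_e satisfies.simps D0_simps
  proof (intro ballI)
    fix X Y assume X: "X \<in> Ds" and Y: "Y \<in> Ds"
    have XW: "X \<subseteq> W" and YW: "Y \<subseteq> W" using X Y Ds_W by auto
    have BW: "Bg ` X \<subseteq> W" using Bg_W XW by blast
    have e1: "gam (prd (gam (Bg ` X)) Y) = gam (prd (Bg ` X) Y)"
      using nucleus[OF BW YW] Ds_gam[OF Y] by simp
    have e2: "gam (prd Y (gam (Bg ` X))) = gam (prd Y (Bg ` X))"
      using nucleus[OF YW BW] Ds_gam[OF Y] by simp
    have "gam (prd (Bg ` X) Y) \<subseteq> gam (prd Y (Bg ` X))"
    proof (rule gam_le[OF prd_W[OF BW YW] prd_W[OF YW BW]])
      fix s assume "s \<in> prd (Bg ` X) Y"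
      then obtain x y where s: "s = Ml (Bg x) y" "x \<in> X" "y \<in> Y" unfolding prd_def by blast
      have "Ml y (Bg x) \<in> prd Y (Bg ` X)" using s unfolding prd_def by blast
      moreover have "evl s \<sqsubseteq> evl (Ml y (Bg x))" using sC s XW YW subsetD[OF XW] subsetD[OF YW] unfolding Eq_bang_e by auto
      ultimately show "\<exists>t\<in>prd Y (Bg ` X). evl s \<sqsubseteq> evl t" by blast
    qed
    moreover have "gam (prd Y (Bg ` X)) \<subseteq> gam (prd (Bg ` X) Y)"
    proof (rule gam_le[OF prd_W[OF YW BW] prd_W[OF BW YW]])
      fix s assume "s \<in> prd Y (Bg ` X)"
      then obtain x y where s: "s = Ml y (Bg x)" "x \<in> X" "y \<in> Y" unfolding prd_def by blast
      have "Ml (Bg x) y \<in> prd (Bg ` X) Y" using s unfolding prd_def by blast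
      moreover have "evl s \<sqsubseteq> evl (Ml (Bg x) y)" using sC s XW YW subsetD[OF XW] subsetD[OF YW] unfolding Eq_bang_e by auto
      ultimately show "\<exists>t\<in>prd (Bg ` X) Y. evl s \<sqsubseteq> evl t" by blast
    qed
    ultimately show "gam (prd (gam (Bg ` X)) Y) = gam (prd Y (gam (Bg ` X)))" using e1 e2 by blast
  qed
next
  case Eq_bang_a1
  assume sC: "satisfies C e"
  show ?thesis unfolding Eq_bang_a1 satisfies.simps D0_simps
  proof (intro ballI)
    fix X Y Z assume X: "X \<in> Ds" and Y: "Y \<in> Ds" and Z: "Z \<in> Ds"
    have XW: "X \<subseteq> W" and YW: "Y \<subseteq> W" and ZW: "Z \<subseteq> W" using X Y Z Ds_W by auto
    have BW: "Bg ` X \<subseteq> W" using Bg_W XW by blast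
    have e1: "gam (prd (gam (Bg ` X)) (gam (prd Y Z))) = gam (prd (Bg ` X) (prd Y Z))"
      using nucleus[OF BW prd_W[OF YW ZW]] by simp
    have e0: "gam (prd (gam (Bg ` X)) Y) = gam (prd (Bg ` X) Y)"
      using nucleus[OF BW YW] Ds_gam[OF Y] by simp
    have e2: "gam (prd (gam (prd (gam (Bg ` X)) Y)) Z) = gam (prd (prd (Bg ` X) Y) Z)"
      unfolding e0 using nucleus[OF prd_W[OF BW YW] ZW] Ds_gam[OF Z] by simp
    have "gam (prd (Bg ` X) (prd Y Z)) \<subseteq> gam (prd (prd (Bg ` X) Y) Z)"
    proof (rule gam_le[OF prd_W[OF BW prd_W[OF YW ZW]] prd_W[OF prd_W[OF BW YW] ZW]])
      fix s assume "s \<in> prd (Bg ` X) (prd Y Z)"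
      then obtain x y z where s: "s = Ml (Bg x) (Ml y z)" "x \<in> X" "y \<in> Y" "z \<in> Z" unfolding prd_def by blast
      have "Ml (Ml (Bg x) y) z \<in> prd (prd (Bg ` X) Y) Z" using s unfolding prd_def by blast
      moreover have "evl s \<sqsubseteq> evl (Ml (Ml (Bg x) y) z)" using sC s XW YW ZW subsetD[OF XW] subsetD[OF YW] subsetD[OF ZW] unfolding Eq_bang_a1 by auto
      ultimately show "\<exists>t\<in>prd (prd (Bg ` X) Y) Z. evl s \<sqsubseteq> evl t" by blast
    qed
    moreover have "gam (prd (prd (Bg ` X) Y) Z) \<subseteq> gam (prd (Bg ` X) (prd Y Z))"
    proof (rule gam_le[OF prd_W[OF prd_W[OF BW YW] ZW] prd_W[OF BW prd_W[OF YW ZW]]])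
      fix s assume "s \<in> prd (prd (Bg ` X) Y) Z"
      then obtain x y z where s: "s = Ml (Ml (Bg x) y) z" "x \<in> X" "y \<in> Y" "z \<in> Z" unfolding prd_def by blast
      have "Ml (Bg x) (Ml y z) \<in> prd (Bg ` X) (prd Y Z)" using s unfolding prd_def by blast
      moreover have "evl s \<sqsubseteq> evl (Ml (Bg x) (Ml y z))" using sC s XW YW ZW subsetD[OF XW] subsetD[OF YW] subsetD[OF ZW] unfolding Eq_bang_a1 by auto
      ultimately show "\<exists>t\<in>prd (Bg ` X) (prd Y Z). evl s \<sqsubseteq> evl t" by blast
    qed
    ultimately show "gam (prd (gam (Bg ` X)) (gam (prd Y Z))) = gam (prd (gam (prd (gam (Bg ` X)) Y)) Z)"
      using e1 e2 by blast
  qed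
next
  case Eq_bang_a2
  assume sC: "satisfies C e"
  show ?thesis unfolding Eq_bang_a2 satisfies.simps D0_simps
  proof (intro ballI)
    fix X Y Z assume X: "X \<in> Ds" and Y: "Y \<in> Ds" and Z: "Z \<in> Ds"
    have XW: "X \<subseteq> W" and YW: "Y \<subseteq> W" and ZW: "Z \<subseteq> W" using X Y Z Ds_W by auto
    have BW: "Bg ` Z \<subseteq> W" using Bg_W ZW by blast
    have e0: "gam (prd Y (gam (Bg ` Z))) = gam (prd Y (Bg ` Z))"
      using nucleus[OF YW BW] Ds_gam[OF Y] by simp
    have e1: "gam (prd X (gam (prd Y (gam (Bg ` Z))))) = gam (prd X (prd Y (Bg ` Z)))"
      unfolding e0 using nucleus[OF XW prd_W[OF YW BW]] Ds_gam[OF X] by simp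
    have e2: "gam (prd (gam (prd X Y)) (gam (Bg ` Z))) = gam (prd (prd X Y) (Bg ` Z))"
      using nucleus[OF prd_W[OF XW YW] BW] by simp
    have "gam (prd X (prd Y (Bg ` Z))) \<subseteq> gam (prd (prd X Y) (Bg ` Z))"
    proof (rule gam_le[OF prd_W[OF XW prd_W[OF YW BW]] prd_W[OF prd_W[OF XW YW] BW]])
      fix s assume "s \<in> prd X (prd Y (Bg ` Z))"
      then obtain x y z where s: "s = Ml x (Ml y (Bg z))" "x \<in> X" "y \<in> Y" "z \<in> Z" unfolding prd_def by blast
      have "Ml (Ml x y) (Bg z) \<in> prd (prd X Y) (Bg ` Z)" using s unfolding prd_def by blast
      moreover have "evl s \<sqsubseteq> evl (Ml (Ml x y) (Bg z))" using sC s XW YW ZW subsetD[OF XW] subsetD[OF YW] subsetD[OF ZW] unfolding Eq_bang_a2 by auto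
      ultimately show "\<exists>t\<in>prd (prd X Y) (Bg ` Z). evl s \<sqsubseteq> evl t" by blast
    qed
    moreover have "gam (prd (prd X Y) (Bg ` Z)) \<subseteq> gam (prd X (prd Y (Bg ` Z)))"
    proof (rule gam_le[OF prd_W[OF prd_W[OF XW YW] BW] prd_W[OF XW prd_W[OF YW BW]]])
      fix s assume "s \<in> prd (prd X Y) (Bg ` Z)"
      then obtain x y z where s: "s = Ml (Ml x y) (Bg z)" "x \<in> X" "y \<in> Y" "z \<in> Z" unfolding prd_def by blast
      have "Ml x (Ml y (Bg z)) \<in> prd X (prd Y (Bg ` Z))" using s unfolding prd_def by blast
      moreover have "evl s \<sqsubseteq> evl (Ml x (Ml y (Bg z)))" using sC s XW YW ZW subsetD[OF XW] subsetD[OF YW] subsetD[OF ZW] unfolding Eq_bang_a2 by auto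
      ultimately show "\<exists>t\<in>prd X (prd Y (Bg ` Z)). evl s \<sqsubseteq> evl t" by blast
    qed
    ultimately show "gam (prd X (gam (prd Y (gam (Bg ` Z))))) = gam (prd (gam (prd X Y)) (gam (Bg ` Z)))"
      using e1 e2 by blast
  qed
qed


lemma basic_Hl: "basic Hl b = {w \<in> W. evl w \<sqsubseteq> b}" unfolding basic_def by simp

lemma Lf_B: "b \<in> B \<Longrightarrow> Lf b \<in> W" by (simp add: Lb_def)
lemma BA': "b \<in> B \<Longrightarrow> b \<in> A" using BA by blast

lemma pe_D0: "partial_embedding C B (\<lambda>b. basic Hl b) D0"
  unfolding partial_embedding_def D0_simps
proof (intro conjI ballI impI)
  show "inj_on (\<lambda>b. basic Hl b) B"
  proof (rule inj_onI)
    fix b1 b2 assume b: "b1 \<in> B" "b2 \<in> B" and e: "basic Hl b1 = basic Hl b2"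
    have m1: "Lf b1 \<in> basic Hl b1" and m2: "Lf b2 \<in> basic Hl b2" unfolding basic_Hl using b Lf_B BA' by auto
    have "Lf b1 \<in> basic Hl b2" using m1 unfolding e .
    moreover have "Lf b2 \<in> basic Hl b1" using m2 unfolding e[symmetric] .
    ultimately have "b1 \<sqsubseteq> b2" "b2 \<sqsubseteq> b1" unfolding basic_Hl by auto
    then show "b1 = b2" using le_antisym b BA' by blast
  qed
  show "(\<lambda>b. basic Hl b) ` B \<subseteq> Ds" using basic_Ds PC_Hl by blast
  show "basic Hl (one C) = W" if "one C \<in> B" unfolding basic_Hl using le_one by auto
  fix x assume x: "x \<in> B"
  have xA: "x \<in> A" using x BA by blast
  have hx: "basic Hl x \<subseteq> W" using basic_W by blast
  show "basic Hl (bang C x) = gam (Bg ` basic Hl x)" if bx: "bang C x \<in> B"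
  proof
    show "gam (Bg ` basic Hl x) \<subseteq> basic Hl (bang C x)"
    proof (rule gam_least[OF _ basic_Ds[OF PC_Hl bx]])
      show "Bg ` basic Hl x \<subseteq> basic Hl (bang C x)"
        unfolding basic_Hl using bang_mono xA by auto
    qed
    show "basic Hl (bang C x) \<subseteq> gam (Bg ` basic Hl x)"
    proof
      fix w assume w: "w \<in> basic Hl (bang C x)"
      have "Bg (Lf x) \<in> Bg ` basic Hl x" unfolding basic_Hl using x Lf_B xA by auto
      moreover have "evl w \<sqsubseteq> evl (Bg (Lf x))" using w unfolding basic_Hl by auto
      ultimately show "w \<in> gam (Bg ` basic Hl x)" using down_gen[of "Bg ` basic Hl x" w] w basic_W Bg_W[OF hx] by blast
    qed
  qed
  fix y assume y: "y \<in> B"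
  have yA: "y \<in> A" using y BA by blast
  have hy: "basic Hl y \<subseteq> W" using basic_W by blast
  show "basic Hl (meet C x y) = basic Hl x \<inter> basic Hl y"
  proof (intro set_eqI iffI)
    fix w assume "w \<in> basic Hl (meet C x y)"
    then have wW: "w \<in> W" and wl: "evl w \<sqsubseteq> meet C x y" unfolding basic_Hl by auto
    have "evl w \<sqsubseteq> x" using le_trans[OF _ _ _ wl meet_lb1[OF xA yA]] wW xA yA by simp
    moreover have "evl w \<sqsubseteq> y" using le_trans[OF _ _ _ wl meet_lb2[OF xA yA]] wW xA yA by simp
    ultimately show "w \<in> basic Hl x \<inter> basic Hl y" unfolding basic_Hl using wW by blast
  next
    fix w assume "w \<in> basic Hl x \<inter> basic Hl y"
    then have wW: "w \<in> W" and "evl w \<sqsubseteq> x" "evl w \<sqsubseteq> y" unfolding basic_Hl by auto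
    then have "evl w \<sqsubseteq> meet C x y" using meet_glb xA yA by simp
    then show "w \<in> basic Hl (meet C x y)" unfolding basic_Hl using wW by blast
  qed
  show "basic Hl (join C x y) = gam (basic Hl x \<union> basic Hl y)" if bj: "join C x y \<in> B"
  proof
    show "gam (basic Hl x \<union> basic Hl y) \<subseteq> basic Hl (join C x y)"
    proof (rule gam_least[OF _ basic_Ds[OF PC_Hl bj]])
      have "basic Hl x \<subseteq> basic Hl (join C x y)" "basic Hl y \<subseteq> basic Hl (join C x y)"
        unfolding basic_Hl using xA yA join_ub1 join_ub2 le_trans[of _ x "join C x y"] le_trans[of _ y "join C x y"] by auto
      then show "basic Hl x \<union> basic Hl y \<subseteq> basic Hl (join C x y)" by blast
    qed
    show "basic Hl (join C x y) \<subseteq> gam (basic Hl x \<union> basic Hl y)"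
    proof
      fix w assume w: "w \<in> basic Hl (join C x y)"
      have wW: "w \<in> W" using w basic_W by blast
      show "w \<in> gam (basic Hl x \<union> basic Hl y)" unfolding gam_def
      proof (intro CollectI conjI ballI impI wW)
        fix c b assume cb: "c \<in> PC" "b \<in> B" "basic Hl x \<union> basic Hl y \<subseteq> basic c b"
        have bA: "b \<in> A" using cb BA by blast
        have "Lf x \<in> basic c b" "Lf y \<in> basic c b" using cb(3) x y Lf_B xA yA unfolding basic_Hl by auto
        then have "ev C x c \<sqsubseteq> b" "ev C y c \<sqsubseteq> b" unfolding basic_def by auto
        then have "ev C (join C x y) c \<sqsubseteq> b" using ctx_join[OF cb(1) xA yA bA] by blast
        moreover have "ev C (evl w) c \<sqsubseteq> ev C (join C x y) c"
          using ctx_mono[OF cb(1)] w wW xA yA unfolding basic_Hl by auto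
        moreover have "ev C (evl w) c \<in> A" "ev C (join C x y) c \<in> A"
          using ev_A PC_lblsA[OF cb(1)] wW xA yA by auto
        ultimately have "ev C (evl w) c \<sqsubseteq> b" using le_trans bA by blast
        then show "w \<in> basic c b" unfolding basic_def using wW by blast
      qed
    qed
  qed
  show "basic Hl (mult C x y) = gam (prd (basic Hl x) (basic Hl y))" if bm: "mult C x y \<in> B"
  proof
    show "gam (prd (basic Hl x) (basic Hl y)) \<subseteq> basic Hl (mult C x y)"
    proof (rule gam_least[OF _ basic_Ds[OF PC_Hl bm]])
      show "prd (basic Hl x) (basic Hl y) \<subseteq> basic Hl (mult C x y)"
        unfolding prd_def basic_Hl using xA yA mult_mono by auto
    qed
    show "basic Hl (mult C x y) \<subseteq> gam (prd (basic Hl x) (basic Hl y))"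
    proof
      fix w assume w: "w \<in> basic Hl (mult C x y)"
      have "Ml (Lf x) (Lf y) \<in> prd (basic Hl x) (basic Hl y)"
        unfolding prd_def basic_Hl using x y Lf_B xA yA by auto
      moreover have "evl w \<sqsubseteq> evl (Ml (Lf x) (Lf y))" using w unfolding basic_Hl by auto
      ultimately show "w \<in> gam (prd (basic Hl x) (basic Hl y))"
        using down_gen[of "prd (basic Hl x) (basic Hl y)" w] w basic_W prd_W[OF hx hy] by blast
    qed
  qed
  show "basic Hl (ldiv C x y) = {w \<in> W. \<forall>z\<in>basic Hl x. Ml z w \<in> basic Hl y}"
  proof (intro set_eqI iffI)
    fix w assume w: "w \<in> basic Hl (ldiv C x y)"
    have wW: "w \<in> W" and wl: "evl w \<sqsubseteq> ldiv C x y" using w unfolding basic_Hl by auto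
    have "mult C x (evl w) \<sqsubseteq> y" using res_l xA yA wW wl by simp
    moreover have "mult C (evl z) (evl w) \<sqsubseteq> mult C x (evl w)" if "z \<in> basic Hl x" for z
      using that wW xA mult_mono_l unfolding basic_Hl by auto
    ultimately have "mult C (evl z) (evl w) \<sqsubseteq> y" if "z \<in> basic Hl x" for z
      using le_trans[of "mult C (evl z) (evl w)" "mult C x (evl w)" y] that wW xA yA subsetD[OF basic_W that] by auto
    then show "w \<in> {w \<in> W. \<forall>z\<in>basic Hl x. Ml z w \<in> basic Hl y}"
      using wW unfolding basic_Hl by auto
  next
    fix w assume w: "w \<in> {w \<in> W. \<forall>z\<in>basic Hl x. Ml z w \<in> basic Hl y}"
    have wW: "w \<in> W" using w by blast
    have "Lf x \<in> basic Hl x" unfolding basic_Hl using x Lf_B xA by auto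
    then have "Ml (Lf x) w \<in> basic Hl y" using w by blast
    then have "mult C x (evl w) \<sqsubseteq> y" unfolding basic_Hl by simp
    then have "evl w \<sqsubseteq> ldiv C x y" using res_l xA yA wW by simp
    then show "w \<in> basic Hl (ldiv C x y)" unfolding basic_Hl using wW by blast
  qed
  show "basic Hl (rdiv C x y) = {w \<in> W. \<forall>z\<in>basic Hl y. Ml w z \<in> basic Hl x}"
  proof (intro set_eqI iffI)
    fix w assume w: "w \<in> basic Hl (rdiv C x y)"
    have wW: "w \<in> W" and wl: "evl w \<sqsubseteq> rdiv C x y" using w unfolding basic_Hl by auto
    have "mult C (evl w) y \<sqsubseteq> x" using res_r xA yA wW wl by simp
    moreover have "mult C (evl w) (evl z) \<sqsubseteq> mult C (evl w) y" if "z \<in> basic Hl y" for z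
      using that wW yA mult_mono_r unfolding basic_Hl by auto
    ultimately have "mult C (evl w) (evl z) \<sqsubseteq> x" if "z \<in> basic Hl y" for z
      using le_trans[of "mult C (evl w) (evl z)" "mult C (evl w) y" x] that wW xA yA subsetD[OF basic_W that] by auto
    then show "w \<in> {w \<in> W. \<forall>z\<in>basic Hl y. Ml w z \<in> basic Hl x}"
      using wW unfolding basic_Hl by auto
  next
    fix w assume w: "w \<in> {w \<in> W. \<forall>z\<in>basic Hl y. Ml w z \<in> basic Hl x}"
    have wW: "w \<in> W" using w by blast
    have "Lf y \<in> basic Hl y" unfolding basic_Hl using y Lf_B yA by auto
    then have "Ml w (Lf y) \<in> basic Hl x" using w by blast
    then have "mult C (evl w) y \<sqsubseteq> x" unfolding basic_Hl by simp
    then have "evl w \<sqsubseteq> rdiv C x y" using res_r xA yA wW by simp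
    then show "w \<in> basic Hl (rdiv C x y)" unfolding basic_Hl using wW by blast
  qed
qed

lemma frm_result:
  assumes "\<forall>e\<in>E. satisfies C e"
  shows "in_V E D0" "finite (carrier D0)" "partial_embedding C B (\<lambda>b. basic Hl b) D0"
  using iD0 intD0 sat_D0 assms finite_Ds pe_D0 unfolding in_V_def by auto

end

theorem mainTheorem4:
  fixes E :: "eqn set" and C :: "'a irlu" and B :: "'a set"
  assumes "in_V E C" and "B \<subseteq> carrier C" and "finite B"
  shows "\<exists>(D :: nat irlu) h. in_V E D \<and> finite (carrier D) \<and> partial_embedding C B h D"
proof -
  have i: "interior_rlu_groupoid C" "integral C" "\<forall>e\<in>E. satisfies C e" using assms(1) unfolding in_V_def by auto
  interpret frm C B
    by unfold_locales (use i assms(2,3) in auto)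
  show ?thesis using transport[OF frm_result[OF i(3)]] .
qed


end
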